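(* Let $p$ be prime and let $H$ be a proper subgroup of $G=\mathbb{Z}_{p^2}\times\mathbb{Z}_p$. A set $A\subset H$ is a tile of $G$ if and only if it is a spectral set in $G$.
   Context: For $b=(b_1,b_2)\in G$ let $\chi_b(a_1,a_2)=e^{2\pi i(a_1b_1/p^2+a_2b_2/p)}$. $A$ is a spectral set if there is $B\subset G$ with $\{\chi_b|_A:b\in B\}$ an orthogonal basis of $L^2(A)$ (counting measure). $A$ is a tile if there is $T\subset G$ with $A\oplus T=G$ (every element of $G$ uniquely $a+t$, $a\in A,t\in T$). *)

theory Defs
  imports Complex_Main "HOL-Computational_Algebra.Primes"
begin

text \<open>The group G = Z_{p^2} x Z_p, elements represented by pairs of canonical residues.\<close>

definition grpG :: "nat \<Rightarrow> (nat \<times> nat) set" where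
  "grpG p = {(a1, a2). a1 < p^2 \<and> a2 < p}"

definition gadd :: "nat \<Rightarrow> nat \<times> nat \<Rightarrow> nat \<times> nat \<Rightarrow> nat \<times> nat" where
  "gadd p x y = ((fst x + fst y) mod p^2, (snd x + snd y) mod p)"

definition gneg :: "nat \<Rightarrow> nat \<times> nat \<Rightarrow> nat \<times> nat" where
  "gneg p x = ((p^2 - fst x) mod p^2, (p - snd x) mod p)"

definition is_subgroupG :: "nat \<Rightarrow> (nat \<times> nat) set \<Rightarrow> bool" where
  "is_subgroupG p H \<longleftrightarrow> H \<subseteq> grpG p \<and> (0, 0) \<in> H
     \<and> (\<forall>x\<in>H. \<forall>y\<in>H. gadd p x y \<in> H) \<and> (\<forall>x\<in>H. gneg p x \<in> H)"

definition chiG :: "nat \<Rightarrow> nat \<times> nat \<Rightarrow> nat \<times> nat \<Rightarrow> complex" where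
  "chiG p b a = exp (2 * pi * \<i> * complex_of_real
      (real (fst a * fst b) / real (p^2) + real (snd a * snd b) / real p))"

definition innerA :: "(nat \<times> nat) set \<Rightarrow> (nat \<times> nat \<Rightarrow> complex) \<Rightarrow> (nat \<times> nat \<Rightarrow> complex) \<Rightarrow> complex" where
  "innerA A f g = (\<Sum>a\<in>A. f a * cnj (g a))"

text \<open>{chi_b|_A : b in B} is an orthogonal basis of L^2(A): nonzero, pairwise orthogonal,
  and spanning all functions A -> complex.\<close>
definition spectrum_of :: "nat \<Rightarrow> (nat \<times> nat) set \<Rightarrow> (nat \<times> nat) set \<Rightarrow> bool" where
  "spectrum_of p A B \<longleftrightarrow> B \<subseteq> grpG p
     \<and> (\<forall>b\<in>B. \<exists>a\<in>A. chiG p b a \<noteq> 0)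
     \<and> (\<forall>b\<in>B. \<forall>b'\<in>B. b \<noteq> b' \<longrightarrow> innerA A (chiG p b) (chiG p b') = 0)
     \<and> (\<forall>f :: nat \<times> nat \<Rightarrow> complex. \<exists>c :: nat \<times> nat \<Rightarrow> complex.
          \<forall>a\<in>A. f a = (\<Sum>b\<in>B. c b * chiG p b a))"

definition spectral_set :: "nat \<Rightarrow> (nat \<times> nat) set \<Rightarrow> bool" where
  "spectral_set p A \<longleftrightarrow> (\<exists>B. spectrum_of p A B)"

definition tile :: "nat \<Rightarrow> (nat \<times> nat) set \<Rightarrow> bool" where
  "tile p A \<longleftrightarrow> (\<exists>T. T \<subseteq> grpG p \<and>
     (\<forall>g\<in>grpG p. \<exists>!u. fst u \<in> A \<and> snd u \<in> T \<and> g = gadd p (fst u) (snd u)))"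

end

theory Submission
  imports Defs "HOL-Computational_Algebra.Polynomial_Factorial" "HOL-Library.Function_Algebras" "HOL-Number_Theory.Cong"
begin


lemma eisenstein_irred:
  fixes F :: "int poly" and p :: nat
  assumes pr: "prime p" and dF: "degree F > 0" and lc: "lead_coeff F = 1"
    and dv: "\<forall>i<degree F. int p dvd coeff F i"
    and nd: "\<not> (int p)^2 dvd coeff F 0"
  shows "irreducible F"
proof (rule irreducibleI)
  show "F \<noteq> 0" using dF by auto
  show "\<not> is_unit F" using dF by (auto simp: is_unit_poly_iff)
  fix f g assume Ffg: "F = f * g"
  show "is_unit f \<or> is_unit g"
  proof (rule ccontr)
    assume nu: "\<not> (is_unit f \<or> is_unit g)"
    have pi: "prime (int p)" using pr by simp
    have f0: "f \<noteq> 0" and g0: "g \<noteq> 0" using Ffg dF by auto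
    have lfg: "lead_coeff f * lead_coeff g = 1" using Ffg lc by (simp add: lead_coeff_mult)
    hence lf: "is_unit (lead_coeff f)" and lg: "is_unit (lead_coeff g)"
      by (metis dvd_triv_left dvd_triv_right)+
    have npf: "\<not> int p dvd lead_coeff f"
      using lf pi by (meson dvd_trans not_prime_unit)
    have npg: "\<not> int p dvd lead_coeff g"
      using lg pi by (meson dvd_trans not_prime_unit)
    have degf: "degree f > 0"
    proof (rule ccontr)
      assume "\<not> degree f > 0"
      hence "f = [:lead_coeff f:]" by (metis degree_0_id gr0I)
      hence "is_unit f" using lf by (metis is_unit_const_poly_iff)
      thus False using nu by auto
    qed
    have degg: "degree g > 0"
    proof (rule ccontr)
      assume "\<not> degree g > 0"
      hence "g = [:lead_coeff g:]" by (metis degree_0_id gr0I)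
      hence "is_unit g" using lg by (metis is_unit_const_poly_iff)
      thus False using nu by auto
    qed
    define i0 where "i0 = (LEAST i. \<not> int p dvd coeff f i)"
    define j0 where "j0 = (LEAST i. \<not> int p dvd coeff g i)"
    have i0: "\<not> int p dvd coeff f i0" unfolding i0_def by (rule LeastI[of _ "degree f"]) (use npf in auto)
    have j0: "\<not> int p dvd coeff g j0" unfolding j0_def by (rule LeastI[of _ "degree g"]) (use npg in auto)
    have i0le: "i0 \<le> degree f" unfolding i0_def by (rule Least_le) (use npf in auto)
    have j0le: "j0 \<le> degree g" unfolding j0_def by (rule Least_le) (use npg in auto)
    have bi: "int p dvd coeff f i" if "i < i0" for i using that not_less_Least i0_def by blast
    have bj: "int p dvd coeff g i" if "i < j0" for i using that not_less_Least j0_def by blast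
    define n where "n = i0 + j0"
    have cF: "coeff F n = coeff f i0 * coeff g j0 + (\<Sum>i\<in>{..n}-{i0}. coeff f i * coeff g (n - i))"
      unfolding Ffg coeff_mult by (subst sum.remove[of _ i0]) (auto simp: n_def)
    have rest: "int p dvd (\<Sum>i\<in>{..n}-{i0}. coeff f i * coeff g (n - i))"
    proof (rule dvd_sum)
      fix i assume "i \<in> {..n}-{i0}"
      hence "i < i0 \<or> (i > i0 \<and> n - i < j0)" by (auto simp: n_def)
      thus "int p dvd coeff f i * coeff g (n - i)" using bi bj by auto
    qed
    have degF: "degree F = degree f + degree g" using Ffg f0 g0 by (simp add: degree_mult_eq)
    have "n \<ge> degree F"
    proof (rule ccontr)
      assume "\<not> n \<ge> degree F"
      hence "int p dvd coeff F n" using dv by auto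
      hence "int p dvd coeff f i0 * coeff g j0" using cF rest by (metis dvd_add_left_iff)
      thus False using i0 j0 pi by (meson prime_dvd_mult_iff)
    qed
    hence "i0 = degree f" "j0 = degree g" using i0le j0le degF by (auto simp: n_def)
    hence "int p dvd coeff f 0" "int p dvd coeff g 0" using bi bj degf degg by auto
    hence "(int p)^2 dvd coeff f 0 * coeff g 0" by (simp add: power2_eq_square mult_dvd_mono)
    moreover have "coeff F 0 = coeff f 0 * coeff g 0" using Ffg by (simp add: coeff_mult)
    ultimately show False using nd by simp
  qed
qed

lemma pcompose_monom1: "pcompose (monom 1 n) q = q ^ n"
proof (induction n)
  case 0 thus ?case by (simp add: monom_0 pcompose_1 one_pCons)
next
  case (Suc n)
  have "monom (1::'a) (Suc n) = monom 1 1 * monom 1 n" by (simp add: mult_monom)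
  also have "monom (1::'a) 1 = [:0,1:]" by (simp add: monom_Suc monom_0)
  finally show ?case using Suc by (simp add: pcompose_mult pcompose_pCons)
qed

definition Phi :: "nat \<Rightarrow> int poly" where "Phi p = (\<Sum>k<p. monom 1 (k*p))"

lemma coeff_Phi:
  assumes "p > 0"
  shows "coeff (Phi p) i = (if p dvd i \<and> i < p*p then 1 else 0)"
proof -
  have "coeff (Phi p) i = (\<Sum>k<p. if k*p = i then 1 else 0)"
    unfolding Phi_def coeff_sum by (simp add: coeff_monom)
  also have "\<dots> = (\<Sum>k<p. if k = i div p \<and> p dvd i then 1 else 0)"
    by (rule sum.cong) (use assms in \<open>auto simp: mult.commute\<close>)
  also have "\<dots> = (if p dvd i \<and> i < p*p then 1 else 0)"
  proof (cases "p dvd i")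
    case True
    then obtain m where m: "i = p*m" by auto
    have "i div p < p \<longleftrightarrow> i < p*p" using assms unfolding m by simp
    thus ?thesis using True by (simp add: sum.delta)
  qed simp
  finally show ?thesis .
qed

lemma degree_Phi:
  assumes "p \<ge> 2"
  shows "degree (Phi p) = p*(p-1)" and "lead_coeff (Phi p) = 1"
proof -
  have p0: "p > 0" using assms by auto
  have c1: "coeff (Phi p) (p*(p-1)) = 1" using assms by (simp add: coeff_Phi)
  have "\<forall>i>p*(p-1). coeff (Phi p) i = 0"
  proof (intro allI impI)
    fix i assume i: "i > p*(p-1)"
    show "coeff (Phi p) i = 0"
    proof (cases "p dvd i \<and> i < p*p")
      case True
      then obtain k where k: "i = p*k" by auto
      have "p*k < p*p" using True k by simp
      hence "k < p" by simp
      hence "k \<le> p - 1" by simp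
      hence "p*k \<le> p*(p-1)" by simp
      thus ?thesis using i k by simp
    qed (simp add: coeff_Phi p0)
  qed
  hence "degree (Phi p) \<le> p*(p-1)" by (rule degree_le)
  moreover have "p*(p-1) \<le> degree (Phi p)" using c1 by (intro le_degree) simp
  ultimately show dP: "degree (Phi p) = p*(p-1)" by simp
  show "lead_coeff (Phi p) = 1" using c1 dP by simp
qed

definition pdv :: "nat \<Rightarrow> int poly \<Rightarrow> bool" where
  "pdv p F \<longleftrightarrow> (\<forall>i. int p dvd coeff F i)"

lemma pdv_add: "pdv p F \<Longrightarrow> pdv p G \<Longrightarrow> pdv p (F + G)"
  by (simp add: pdv_def)
lemma pdv_diff: "pdv p F \<Longrightarrow> pdv p G \<Longrightarrow> pdv p (F - G)"
  by (simp add: pdv_def)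
lemma pdv_mult: "pdv p F \<Longrightarrow> pdv p (F * G)"
  unfolding pdv_def coeff_mult by (auto intro!: dvd_sum)
lemma pdv_mult2: "pdv p G \<Longrightarrow> pdv p (F * G)"
  using pdv_mult[of p G F] by (simp add: mult.commute)
lemma pdv_sum: "(\<And>k. k \<in> A \<Longrightarrow> pdv p (f k)) \<Longrightarrow> pdv p (sum f A)"
  unfolding pdv_def coeff_sum by (auto intro!: dvd_sum)
lemma pdv_const: "int p dvd c \<Longrightarrow> pdv p ([:c:] * F)"
  unfolding pdv_def by simp
lemma pdv_smult: "int p dvd c \<Longrightarrow> pdv p (smult c F)"
  unfolding pdv_def by simp
lemma pdv_power_diff: "pdv p (F - G) \<Longrightarrow> pdv p (F^k - G^k)"
proof (induction k)
  case 0 thus ?case by (simp add: pdv_def)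
next
  case (Suc k)
  have "F^Suc k - G^Suc k = F * (F^k - G^k) + (F - G) * G^k" by (simp add: algebra_simps)
  thus ?case using Suc pdv_add pdv_mult pdv_mult2 by metis
qed

lemma pdv_frob:
  fixes Z :: "int poly"
  assumes pr: "prime p"
  shows "pdv p ((Z + 1)^p - Z^p - 1)"
proof -
  have p0: "p > 0" using pr prime_gt_0_nat by auto
  have "(Z + 1)^p = (\<Sum>k\<le>p. of_nat (p choose k) * Z^k * 1^(p-k))"
    by (rule binomial_ring)
  also have "\<dots> = (\<Sum>k\<in>{0<..<p}. of_nat (p choose k) * Z^k) + Z^p + 1"
  proof -
    have e: "{..p} = insert 0 (insert p {0<..<p})" using p0 by auto
    show ?thesis unfolding e using p0 by (simp add: algebra_simps)
  qed
  finally have "(Z + 1)^p - Z^p - 1 = (\<Sum>k\<in>{0<..<p}. of_nat (p choose k) * Z^k)" by simp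
  moreover have "pdv p (\<Sum>k\<in>{0<..<p}. of_nat (p choose k) * Z^k)"
  proof (rule pdv_sum)
    fix k assume k: "k \<in> {0<..<p}"
    have "p dvd (p choose k)" using k pr by (intro dvd_choose_prime) auto
    hence "int p dvd int (p choose k)" by simp
    moreover have "(of_nat (p choose k) :: int poly) = [:int (p choose k):]"
      by (simp add: of_nat_poly)
    ultimately show "pdv p (of_nat (p choose k) * Z^k)" by (simp add: pdv_smult)
  qed
  ultimately show ?thesis by simp
qed

lemma pdv_monom_cancel:
  assumes "pdv p (monom 1 m * F)"
  shows "pdv p F"
  unfolding pdv_def
proof
  fix i
  have "coeff (monom 1 m * F) (i + m) = coeff F i" by (simp add: coeff_monom_mult)
  thus "int p dvd coeff F i" using assms unfolding pdv_def by metis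
qed

lemma X_power: "([:0,1:] :: 'a::comm_semiring_1 poly) ^ n = monom 1 n"
proof (induction n)
  case 0 thus ?case by (simp add: monom_0 one_pCons)
next
  case (Suc n)
  have "monom (1::'a) (Suc n) = monom 1 1 * monom 1 n" by (simp add: mult_monom)
  also have "monom (1::'a) 1 = [:0,1:]" by (simp add: monom_Suc monom_0)
  finally show ?case using Suc by simp
qed

lemma monom_power1: "(monom (1::'a::comm_semiring_1) m) ^ n = monom 1 (m*n)"
  by (induction n) (auto simp: monom_0 one_pCons mult_monom)

lemma geo_poly: "(\<Sum>k<n. (Y + 1)^k) * Y = (Y + 1)^n - (1::'a::comm_ring_1)"
  by (induction n) (auto simp: algebra_simps)

lemma Psi_pdv:
  assumes pr: "prime p"
  shows "pdv p (pcompose (Phi p) [:1,1:] - monom 1 (p*(p-1)))"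
proof -
  have p1: "p \<ge> 1" using pr prime_ge_1_nat by auto
  define X :: "int poly" where "X = [:0,1:]"
  define Y :: "int poly" where "Y = monom 1 p"
  have XY: "X^p = Y" unfolding X_def Y_def by (rule X_power)
  have q: "[:1,1:] = X + 1" unfolding X_def by (simp add: one_pCons)
  have Psi: "pcompose (Phi p) [:1,1:] = (\<Sum>k<p. ((X+1)^p)^k)"
    unfolding Phi_def pcompose_sum pcompose_monom1 q by (intro sum.cong refl) (metis power_mult mult.commute)
  define S where "S = (\<Sum>k<p. (Y + 1)^k)"
  have d1: "pdv p (pcompose (Phi p) [:1,1:] - S)"
  proof -
    have "pcompose (Phi p) [:1,1:] - S = (\<Sum>k<p. ((X+1)^p)^k - (Y+1)^k)"
      unfolding Psi S_def by (simp add: sum_subtractf)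
    moreover have "pdv p ((X+1)^p - (Y+1))"
      using pdv_frob[OF pr, of X] XY by (simp add: algebra_simps)
    ultimately show ?thesis by (auto intro!: pdv_sum pdv_power_diff)
  qed
  have "S * Y = (Y+1)^p - 1" unfolding S_def by (rule geo_poly)
  hence "S * Y - Y^p = (Y+1)^p - Y^p - 1" by simp
  hence "pdv p (S * Y - Y^p)" using pdv_frob[OF pr, of Y] by (metis diff_right_commute)
  moreover have "S * Y - Y^p = monom 1 p * (S - Y^(p-1))"
  proof -
    have "Y^p = Y * Y^(p-1)" using p1 by (metis power_eq_if not_one_le_zero)
    thus ?thesis unfolding Y_def by (simp add: algebra_simps)
  qed
  ultimately have "pdv p (S - Y^(p-1))" using pdv_monom_cancel by metis
  moreover have "Y^(p-1) = monom 1 (p*(p-1))" unfolding Y_def by (rule monom_power1)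
  ultimately have "pdv p (S - monom 1 (p*(p-1)))" by simp
  from pdv_add[OF d1 this] show ?thesis by simp
qed

lemma Phi_irreducible:
  assumes pr: "prime p"
  shows "irreducible (Phi p)"
proof -
  have p2: "p \<ge> 2" using pr prime_ge_2_nat by auto
  define Psi where "Psi = pcompose (Phi p) [:1,1:]"
  have dPsi: "degree Psi = p*(p-1)" unfolding Psi_def degree_pcompose using degree_Phi[OF p2] by simp
  have lPsi: "lead_coeff Psi = 1" unfolding Psi_def
    using degree_Phi[OF p2] by (subst lead_coeff_comp) auto
  have dpos: "degree Psi > 0" using dPsi p2 by simp
  have dv: "\<forall>i<degree Psi. int p dvd coeff Psi i"
  proof (intro allI impI)
    fix i assume "i < degree Psi"
    hence "coeff (Psi - monom 1 (p*(p-1))) i = coeff Psi i" using dPsi by (simp add: coeff_monom)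
    thus "int p dvd coeff Psi i" using Psi_pdv[OF pr] unfolding Psi_def[symmetric] pdv_def by metis
  qed
  have c0: "coeff Psi 0 = int p"
  proof -
    have "coeff Psi 0 = poly (Phi p) 1" unfolding Psi_def poly_0_coeff_0[symmetric] poly_pcompose by simp
    also have "\<dots> = int p" unfolding Phi_def by (simp add: poly_sum poly_monom)
    finally show ?thesis .
  qed
  have nd: "\<not> (int p)^2 dvd coeff Psi 0"
  proof
    assume "(int p)^2 dvd coeff Psi 0"
    hence "int p * int p dvd int p * 1" using c0 by (simp add: power2_eq_square)
    hence "int p dvd 1" using p2 by (subst (asm) dvd_times_left_cancel_iff) auto
    thus False using p2 by simp
  qed
  have irP: "irreducible Psi" by (rule eisenstein_irred[OF pr dpos lPsi dv nd])
  define q :: "int poly" where "q = [:1,1:]"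
  have qd: "degree q = 1" unfolding q_def by simp
  have unitq: "is_unit (pcompose f q) \<Longrightarrow> is_unit f" for f :: "int poly"
  proof -
    assume u: "is_unit (pcompose f q)"
    then obtain c where c: "pcompose f q = [:c:]" "c dvd 1" by (auto simp: is_unit_poly_iff)
    hence "degree f = 0" using degree_pcompose[of f q] qd by simp
    hence "f = [:coeff f 0:]" by (metis degree_0_id)
    hence "pcompose f q = [:coeff f 0:]" by (metis pcompose_const)
    hence "coeff f 0 dvd 1" using c by simp
    thus "is_unit f" using \<open>f = [:coeff f 0:]\<close> by (metis is_unit_const_poly_iff)
  qed
  show ?thesis
  proof (rule irreducibleI)
    show "Phi p \<noteq> 0" using irP unfolding Psi_def by auto
    show "\<not> is_unit (Phi p)" using degree_Phi[OF p2] p2 by (auto simp: is_unit_poly_iff)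
    fix a b assume ab: "Phi p = a * b"
    hence "Psi = pcompose a q * pcompose b q" unfolding Psi_def q_def by (simp add: pcompose_mult)
    hence "is_unit (pcompose a q) \<or> is_unit (pcompose b q)" by (rule irreducibleD[OF irP])
    thus "is_unit a \<or> is_unit b" using unitq by blast
  qed
qed

lemma Phi_prime: "prime p \<Longrightarrow> prime_elem (Phi p)"
  by (intro irreducible_imp_prime_poly Phi_irreducible)

definition ev :: "complex \<Rightarrow> int poly \<Rightarrow> complex" where
  "ev z F = poly (map_poly of_int F) z"

lemma map_poly_of_int_mult: "map_poly (of_int :: int \<Rightarrow> 'a::comm_ring_1) (F * G) = map_poly of_int F * map_poly of_int G"
  by (rule poly_eqI) (simp add: coeff_map_poly coeff_mult)

lemma map_poly_of_int_add: "map_poly (of_int :: int \<Rightarrow> 'a::comm_ring_1) (F + G) = map_poly of_int F + map_poly of_int G"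
  by (rule poly_eqI) (simp add: coeff_map_poly)
lemma map_poly_of_int_const: "map_poly (of_int :: int \<Rightarrow> 'a::comm_ring_1) [:c:] = [:of_int c:]"
  by (rule poly_eqI) (simp add: coeff_map_poly coeff_pCons split: nat.splits)
lemma ev_mult: "ev z (F * G) = ev z F * ev z G"
  unfolding ev_def map_poly_of_int_mult by simp
lemma ev_add: "ev z (F + G) = ev z F + ev z G"
  unfolding ev_def by (simp add: map_poly_of_int_add)
lemma ev_smult: "ev z (smult a F) = of_int a * ev z F"
  unfolding ev_def by (simp add: map_poly_smult)
lemma ev_const: "ev z [:c:] = of_int c"
  unfolding ev_def map_poly_of_int_const by simp
lemma ev_sum: "finite A \<Longrightarrow> ev z (sum f A) = (\<Sum>x\<in>A. ev z (f x))"
  by (induction A rule: finite_induct) (auto simp: ev_add, simp add: ev_def)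
lemma ev_monom: "ev z (monom c n) = of_int c * z^n"
  unfolding ev_def by (simp add: poly_monom map_poly_monom)

lemma key_degree_aux:
  fixes Phi :: "int poly"
  assumes pe: "prime_elem Phi" and ez: "ev z Phi = 0"
  shows "\<forall>R. degree R = n \<longrightarrow> R \<noteq> 0 \<longrightarrow> ev z R = 0 \<longrightarrow> degree Phi \<le> n"
proof (induction n rule: less_induct)
  case (less n)
  show ?case
  proof (intro allI impI)
    fix R :: "int poly" assume dR: "degree R = n" and R0: "R \<noteq> 0" and eR: "ev z R = 0"
    show "degree Phi \<le> n"
    proof (rule ccontr)
    assume lt: "\<not> degree Phi \<le> n"
    define r where "r = pseudo_mod Phi R"
    obtain a q where aq: "a \<noteq> 0" "smult a Phi = R * q + r" using pseudo_mod(1)[OF R0] r_def by metis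
    have rd: "r = 0 \<or> degree r < degree R" using pseudo_mod(2)[OF R0] r_def by metis
    have "ev z r = 0"
    proof -
      have "ev z (smult a Phi) = ev z (R * q) + ev z r" using aq by (simp add: ev_add)
      thus ?thesis using ez eR by (simp add: ev_smult ev_mult)
    qed
    have r0: "r = 0"
    proof (rule ccontr)
      assume "r \<noteq> 0"
      hence "degree Phi \<le> degree r" using less.IH rd \<open>ev z r = 0\<close> dR by blast
      thus False using rd lt \<open>r \<noteq> 0\<close> dR by auto
    qed
    have "Phi dvd R * q" using aq r0 by (metis add.right_neutral dvd_smult dvd_refl)
    hence "Phi dvd R \<or> Phi dvd q" using pe by (simp add: prime_elem_dvd_mult_iff)
    thus False
    proof
      assume "Phi dvd R"
      hence "degree Phi \<le> degree R" using R0 by (rule dvd_imp_degree_le)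
      thus False using lt dR by simp
    next
      assume "Phi dvd q"
      then obtain q' where q': "q = Phi * q'" by auto
      have P0: "Phi \<noteq> 0" using pe by auto
      have "Phi * [:a:] = Phi * (R * q')" using aq r0 q' by (simp add: algebra_simps)
      hence e: "[:a:] = R * q'" using P0 by (metis mult_left_cancel)
      hence "q' \<noteq> 0" using aq by auto
      hence "degree R = 0" using e R0 by (metis add_eq_0_iff_both_eq_0 degree_mult_eq degree_pCons_0)
      hence "R = [:coeff R 0:]" by (metis degree_0_id)
      hence "ev z R = of_int (coeff R 0)" by (metis ev_const)
      moreover have "coeff R 0 \<noteq> 0" using \<open>R = [:coeff R 0:]\<close> R0 by (metis pCons_0_0)
      ultimately show False using eR by simp
    qed
    qed
  qed
qed

lemma key_degree:
  fixes Phi :: "int poly"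
  assumes pe: "prime_elem Phi" and ez: "ev z Phi = 0"
  shows "R \<noteq> 0 \<Longrightarrow> ev z R = 0 \<Longrightarrow> degree Phi \<le> degree R"
  using key_degree_aux[OF pe ez, of "degree R"] by blast

lemma sum_blocks: "(\<Sum>j<m*p. f j) = (\<Sum>k<m. \<Sum>r<p. f (k*p + r))" for m p :: nat
proof (induction m)
  case 0 thus ?case by simp
next
  case (Suc m)
  have "{..<Suc m * p} = {..<m*p} \<union> {m*p..<m*p+p}" by auto
  hence "(\<Sum>j<Suc m*p. f j) = (\<Sum>j<m*p. f j) + (\<Sum>j\<in>{m*p..<m*p+p}. f j)"
    by (simp add: sum.union_disjoint ivl_disj_int)
  also have "(\<Sum>j\<in>{m*p..<m*p+p}. f j) = (\<Sum>r<p. f (m*p + r))"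
  proof -
    have "sum f {m*p..<m*p+p} = sum f {0 + m*p..<p + m*p}" by (simp add: add.commute)
    also have "\<dots> = (\<Sum>i\<in>{0..<p}. f (i + m*p))" by (rule sum.shift_bounds_nat_ivl)
    also have "\<dots> = (\<Sum>r<p. f (m*p + r))" by (simp add: lessThan_atLeast0 add.commute)
    finally show ?thesis .
  qed
  finally show ?case using Suc by simp
qed

lemma ev_Phi: "ev z (Phi p) = (\<Sum>k<p. z^(k*p))"
  unfolding Phi_def by (simp add: ev_sum ev_monom)

lemma VS0:
  assumes pr: "prime p" and ez: "ev z (Phi p) = 0"
    and s: "(\<Sum>j<p*p. of_int (c j) * z^j) = 0"
  shows "\<forall>j<p*p. c j = c (p*(p-1) + j mod p)"
proof -
  have p2: "p \<ge> 2" using pr prime_ge_2_nat by auto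
  define N where "N = p*(p-1)"
  define e where "e r = c (N + r)" for r
  define R where "R = (\<Sum>j<N. monom (c j - e (j mod p)) j)"
  have pN: "p*p = N + p" unfolding N_def using p2 by (simp add: algebra_simps)
  have eR: "ev z R = (\<Sum>j<p*p. of_int (c j - e (j mod p)) * z^j)"
  proof -
    have "ev z R = (\<Sum>j<N. of_int (c j - e (j mod p)) * z^j)" unfolding R_def by (simp add: ev_sum ev_monom)
    also have "\<dots> = (\<Sum>j<p*p. of_int (c j - e (j mod p)) * z^j)"
    proof -
      have "(\<Sum>j\<in>{N..<p*p}. of_int (c j - e (j mod p)) * z^j) = (0::complex)"
      proof (rule sum.neutral, rule ballI)
        fix j assume j: "j \<in> {N..<p*p}"
        have "j mod p = j - N"
        proof -
          have "j = (p-1)*p + (j - N)" using j unfolding N_def by (auto simp: mult.commute)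
          moreover have "j - N < p" using j pN by auto
          ultimately show ?thesis by (metis mod_mult_self3 mod_less)
        qed
        thus "of_int (c j - e (j mod p)) * z^j = 0" using j unfolding e_def by simp
      qed
      moreover have "{..<p*p} = {..<N} \<union> {N..<p*p}" using pN by auto
      ultimately show ?thesis by (simp add: sum.union_disjoint ivl_disj_int)
    qed
    finally show ?thesis .
  qed
  also have "\<dots> = (\<Sum>j<p*p. of_int (c j) * z^j) - (\<Sum>j<p*p. of_int (e (j mod p)) * z^j)"
    by (simp add: algebra_simps sum_subtractf)
  also have "(\<Sum>j<p*p. of_int (e (j mod p)) * z^j) = (\<Sum>r<p. of_int (e r) * z^r) * ev z (Phi p)"
  proof -
    have "(\<Sum>j<p*p. of_int (e (j mod p)) * z^j) = (\<Sum>k<p. \<Sum>r<p. of_int (e ((k*p+r) mod p)) * z^(k*p+r))"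
      by (rule sum_blocks)
    also have "\<dots> = (\<Sum>k<p. \<Sum>r<p. of_int (e r) * z^r * z^(k*p))"
      by (intro sum.cong refl) (simp add: power_add)
    also have "\<dots> = (\<Sum>r<p. of_int (e r) * z^r) * ev z (Phi p)"
      unfolding ev_Phi sum_product by (rule sum.swap)
    finally show ?thesis .
  qed
  finally have "ev z R = 0" using s ez by simp
  have R0: "R = 0"
  proof (rule ccontr)
    assume "R \<noteq> 0"
    hence "degree (Phi p) \<le> degree R" using key_degree[OF Phi_prime[OF pr] ez] \<open>ev z R = 0\<close> by blast
    moreover have "degree R \<le> N - 1" unfolding R_def
      by (rule degree_sum_le) (auto simp: degree_monom_le intro: order.trans[OF degree_monom_le])
    moreover have "N > 0" unfolding N_def using p2 by simp
    moreover have "degree (Phi p) = N" using degree_Phi(1)[OF p2] N_def by simp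
    ultimately show False by linarith
  qed
  show ?thesis
  proof (intro allI impI)
    fix j assume j: "j < p*p"
    show "c j = c (p*(p-1) + j mod p)"
    proof (cases "j < N")
      case True
      have "coeff R j = c j - e (j mod p)" unfolding R_def coeff_sum using True
        by (simp add: coeff_monom sum.delta)
      thus ?thesis using R0 unfolding e_def N_def by simp
    next
      case False
      have h1: "j = (p-1)*p + (j - N)" using False unfolding N_def by (auto simp: mult.commute)
      have "j < N + p" using j pN by simp
      hence h2: "j - N < p" using p2 by arith
      from h1 h2 have "j mod p = j - N" by (metis mod_mult_self3 mod_less)
      thus ?thesis using False unfolding N_def by simp
    qed
  qed
qed


definition zz :: "nat \<Rightarrow> int \<Rightarrow> complex" where
  "zz p x = cis (2 * pi * real_of_int x / real (p^2))"

lemma chi_zz: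
  assumes "p > 0"
  shows "chiG p b a = zz p (int (fst a * fst b) + int p * int (snd a * snd b))"
proof -
  define r where "r = real (fst a * fst b) / real (p^2) + real (snd a * snd b) / real p"
  have r: "r = real_of_int (int (fst a * fst b) + int p * int (snd a * snd b)) / real (p^2)"
    unfolding r_def using assms by (simp add: field_simps power2_eq_square)
  have "chiG p b a = exp (\<i> * complex_of_real (2 * pi * r))"
    unfolding chiG_def r_def by (simp add: algebra_simps)
  also have "\<dots> = cis (2 * pi * r)" by (simp add: cis_conv_exp)
  finally show ?thesis unfolding zz_def r by (simp add: mult.assoc)
qed

lemma zz_add: "zz p (x + y) = zz p x * zz p y"
  unfolding zz_def by (simp add: cis_mult add_divide_distrib algebra_simps)

lemma zz_diff: "zz p (x - y) = zz p x * cnj (zz p y)"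
  unfolding zz_def by (simp add: cis_mult cis_cnj diff_divide_distrib algebra_simps)

lemma zz_cnj: "cnj (zz p x) = zz p (-x)"
  unfolding zz_def by (simp add: cis_cnj)

lemma zz_0 [simp]: "zz p 0 = 1"
  unfolding zz_def by simp

lemma zz_nonzero [simp]: "zz p x \<noteq> 0"
  unfolding zz_def by simp

lemma zz_norm [simp]: "zz p x * cnj (zz p x) = 1"
  by (metis add.right_inverse zz_0 zz_add zz_cnj)

lemma zz_eq_1_iff:
  assumes "p > 0"
  shows "zz p x = 1 \<longleftrightarrow> int (p^2) dvd x"
proof
  assume "int (p^2) dvd x"
  then obtain k where k: "x = int (p^2) * k" by (auto elim!: dvdE)
  have "2 * pi * real_of_int x / real (p^2) = 2 * pi * real_of_int k"
    unfolding k using assms by (simp add: field_simps)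
  thus "zz p x = 1" unfolding zz_def by simp
next
  assume "zz p x = 1"
  hence "cos (2 * pi * real_of_int x / real (p^2)) = 1" unfolding zz_def
    by (metis complex.sel(1) cis.sel(1) one_complex.sel(1))
  then obtain n :: int where n: "2 * pi * real_of_int x / real (p^2) = real_of_int n * 2 * pi"
    by (metis cos_one_2pi_int)
  hence "real_of_int x = real_of_int n * real (p^2)" using assms pi_gt_zero
    by (simp add: field_simps)
  hence "x = n * int (p^2)" by (metis of_int_eq_iff of_int_mult of_int_of_nat_eq)
  thus "int (p^2) dvd x" by simp
qed

lemma zz_mod_eq:
  assumes "p > 0" and "x mod int (p^2) = y mod int (p^2)"
  shows "zz p x = zz p y"
proof -
  have "int (p^2) dvd x - y" using assms(2) by (simp add: mod_eq_dvd_iff)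
  hence "zz p (x - y) = 1" using assms(1) zz_eq_1_iff by blast
  hence "zz p x * cnj (zz p y) = 1" by (simp add: zz_diff)
  hence "zz p x * cnj (zz p y) * zz p y = zz p y" by simp
  moreover have "cnj (zz p y) * zz p y = 1" by (metis zz_norm mult.commute)
  ultimately show ?thesis by (simp add: mult.assoc)
qed

lemma zz_power: "zz p x ^ k = zz p (int k * x)"
  by (induction k) (auto simp: zz_add algebra_simps)

lemma zz_geom:
  assumes "zz p m \<noteq> 1" and "zz p (int N * m) = 1"
  shows "(\<Sum>k<N. zz p (int k * m)) = 0"
proof -
  have "(\<Sum>k<N. zz p (int k * m)) = (\<Sum>k<N. zz p m ^ k)" by (simp add: zz_power)
  also have "\<dots> = (zz p m ^ N - 1) / (zz p m - 1)" using assms(1) by (rule geometric_sum)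
  also have "\<dots> = 0" using assms by (simp add: zz_power)
  finally show ?thesis .
qed

lemma sum_by_fiber:
  fixes h :: "'x \<Rightarrow> nat" and n :: nat
  assumes "finite X" and "\<forall>x\<in>X. h x < n"
  shows "(\<Sum>x\<in>X. g (h x)) = (\<Sum>j<n. of_nat (card {x\<in>X. h x = j}) * (g j :: 'c::comm_ring_1))"
  using assms
proof (induction X rule: finite_induct)
  case empty thus ?case by simp
next
  case (insert x X)
  have c: "card {y\<in>insert x X. h y = j} = card {y\<in>X. h y = j} + (if h x = j then 1 else 0)" for j
  proof (cases "h x = j")
    case True
    have "{y\<in>insert x X. h y = j} = insert x {y\<in>X. h y = j}" using True by auto
    thus ?thesis using insert True by simp
  next
    case False
    have "{y\<in>insert x X. h y = j} = {y\<in>X. h y = j}" using False by auto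
    thus ?thesis using False by simp
  qed
  have "(\<Sum>j<n. of_nat (card {y\<in>insert x X. h y = j}) * g j)
      = (\<Sum>j<n. of_nat (card {y\<in>X. h y = j}) * g j) + (\<Sum>j<n. (if h x = j then g j else 0))"
  proof -
    have "of_nat (card {y\<in>insert x X. h y = j}) * g j = of_nat (card {y\<in>X. h y = j}) * g j + (if h x = j then g j else 0)" for j
      unfolding c by (simp add: algebra_simps)
    thus ?thesis by (simp add: sum.distrib)
  qed
  also have "(\<Sum>j<n. (if h x = j then g j else 0)) = g (h x)" using insert.prems by (subst eq_commute) (subst sum.delta, auto)
  finally show ?case using insert by simp
qed

lemma ev_zeta_Phi:
  assumes pr: "prime p"
  shows "ev (zz p 1) (Phi p) = 0"
proof -
  have p0: "p > 0" using pr prime_gt_0_nat by blast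
  have p2: "p \<ge> 2" using pr prime_ge_2_nat by blast
  have "ev (zz p 1) (Phi p) = (\<Sum>k<p. zz p 1 ^ (k*p))" by (rule ev_Phi)
  also have "\<dots> = (\<Sum>k<p. zz p (int k * int p))" by (simp add: zz_power)
  also have "\<dots> = 0"
  proof (rule zz_geom)
    show "zz p (int p) \<noteq> 1"
    proof
      assume "zz p (int p) = 1"
      hence "int (p^2) dvd int p" using zz_eq_1_iff p0 by blast
      hence "p * p dvd p * 1" by (simp add: power2_eq_square)
      hence "p dvd 1" using p0 by (subst (asm) dvd_times_left_cancel_iff) auto
      thus False using p2 by simp
    qed
    show "zz p (int p * int p) = 1" using zz_eq_1_iff p0 by (simp add: power2_eq_square)
  qed
  finally show ?thesis .
qed

lemma zz_mod_eq2:
  assumes "p > 0" and "x mod int (p*p) = y mod int (p*p)"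
  shows "zz p x = zz p y"
  using zz_mod_eq[of p x y] assms by (simp add: power2_eq_square)

lemma prime_int_p: "prime p \<Longrightarrow> prime (int p)" by simp

lemma coprime_pp:
  assumes pr: "prime p" and nd: "\<not> int p dvd D"
  shows "coprime D (int (p*p))"
proof -
  have "coprime (int p) D" using prime_imp_coprime[OF prime_int_p[OF pr] nd] .
  hence "coprime D (int p)" by (simp add: coprime_commute)
  thus ?thesis by simp
qed

lemma nat_mod_aux:
  assumes "p > 0"
  shows "int (nat (y mod int (p*p)) mod p) = y mod int p"
proof -
  have "int (nat (y mod int (p*p))) = y mod int (p*p)" using assms by simp
  hence "int (nat (y mod int (p*p)) mod p) = (y mod int (p*p)) mod int p" by (simp add: of_nat_mod)
  also have "\<dots> = y mod int p" by (rule mod_mod_cancel) simp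
  finally show ?thesis .
qed

lemma nat_mult_eq:
  assumes "p > 0" and "y \<ge> 0"
  shows "nat (int p * y) = p * k \<longleftrightarrow> y = int k"
proof -
  have "nat (int p * y) = p * k \<longleftrightarrow> int p * y = int p * int k"
    using assms by (auto simp: nat_eq_iff)
  also have "\<dots> \<longleftrightarrow> y = int k" using assms by simp
  finally show ?thesis .
qed

lemma VS_count:
  fixes f :: "'x \<Rightarrow> int"
  assumes pr: "prime p" and fin: "finite X" and s: "(\<Sum>x\<in>X. zz p (f x)) = 0"
  shows "\<forall>j<p*p. \<forall>j'<p*p. j mod p = j' mod p \<longrightarrow>
            card {x\<in>X. nat (f x mod int (p*p)) = j} = card {x\<in>X. nat (f x mod int (p*p)) = j'}"
    and "p dvd card X"
proof -
  have p0: "p > 0" using pr prime_gt_0_nat by blast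
  define h where "h x = nat (f x mod int (p*p))" for x
  define cnt where "cnt j = card {x\<in>X. h x = j}" for j
  have hlt: "\<forall>x\<in>X. h x < p*p" unfolding h_def using p0
    by (auto simp: nat_less_iff)
  have zh: "zz p (f x) = zz p 1 ^ h x" for x
  proof -
    have "int (h x) = f x mod int (p*p)" unfolding h_def using p0 by simp
    hence "zz p (f x) = zz p (int (h x))" using p0 by (intro zz_mod_eq2) auto
    thus ?thesis by (simp add: zz_power)
  qed
  have "(\<Sum>x\<in>X. zz p (f x)) = (\<Sum>x\<in>X. (\<lambda>j. zz p 1 ^ j) (h x))" by (simp add: zh)
  also have "\<dots> = (\<Sum>j<p*p. of_nat (cnt j) * zz p 1 ^ j)"
    unfolding cnt_def by (rule sum_by_fiber[OF fin hlt])
  finally have "(\<Sum>j<p*p. of_int (int (cnt j)) * zz p 1 ^ j) = 0" using s by simp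
  from VS0[OF pr ev_zeta_Phi[OF pr] this]
  have c: "\<forall>j<p*p. int (cnt j) = int (cnt (p*(p-1) + j mod p))" .
  show "\<forall>j<p*p. \<forall>j'<p*p. j mod p = j' mod p \<longrightarrow>
            card {x\<in>X. nat (f x mod int (p*p)) = j} = card {x\<in>X. nat (f x mod int (p*p)) = j'}"
  proof (intro allI impI)
    fix j j' assume j: "j < p*p" and j': "j' < p*p" and m: "j mod p = j' mod p"
    have "int (cnt j) = int (cnt j')" using c[rule_format, OF j] c[rule_format, OF j'] m by simp
    thus "card {x\<in>X. nat (f x mod int (p*p)) = j} = card {x\<in>X. nat (f x mod int (p*p)) = j'}"
      unfolding cnt_def h_def by simp
  qed
  have "int (card X) = (\<Sum>x\<in>X. (\<lambda>j. (1::int)) (h x))" by simp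
  also have "\<dots> = (\<Sum>j<p*p. int (cnt j))"
    unfolding cnt_def using sum_by_fiber[OF fin hlt, of "\<lambda>j. (1::int)"] by simp
  also have "\<dots> = (\<Sum>k<p. \<Sum>r<p. int (cnt (k*p + r)))" by (rule sum_blocks)
  also have "\<dots> = (\<Sum>k<p. \<Sum>r<p. int (cnt (p*(p-1) + r)))"
  proof (intro sum.cong refl)
    fix k r assume k: "k \<in> {..<p}" and r: "r \<in> {..<p}"
    have "k*p + r < p*p"
    proof -
      have "k*p + r < k*p + p" using r by simp
      also have "\<dots> = (k+1)*p" by simp
      also have "\<dots> \<le> p*p" using k by (intro mult_right_mono) auto
      finally show ?thesis .
    qed
    moreover have "(k*p + r) mod p = r" using r by simp
    ultimately show "int (cnt (k*p + r)) = int (cnt (p*(p-1) + r))" using c[rule_format, of "k*p+r"] by simp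
  qed
  also have "\<dots> = int p * (\<Sum>r<p. int (cnt (p*(p-1) + r)))" by simp
  finally have "int p dvd int (card X)" by simp
  thus "p dvd card X" by simp
qed

lemma ZC:
  assumes pr: "prime p" and X: "X \<subseteq> {..<p*p}"
    and s: "(\<Sum>t\<in>X. zz p (int t * D)) = 0"
  shows "p dvd card X"
    and "X \<noteq> {} \<Longrightarrow> \<not> int (p*p) dvd D"
    and "\<not> int p dvd D \<Longrightarrow> \<forall>t\<in>X. (t + p) mod (p*p) \<in> X"
    and "int p dvd D \<Longrightarrow> \<forall>r<p. card {t\<in>X. t mod p = r} = card {t\<in>X. t mod p = 0}"
proof -
  have p0: "p > 0" using pr prime_gt_0_nat by blast
  have p2: "p \<ge> 2" using pr prime_ge_2_nat by blast
  have fin: "finite X" using X finite_subset by blast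
  define f where "f t = int t * D" for t
  note VS = VS_count[OF pr fin s[folded f_def]]
  show "p dvd card X" by (rule VS(2))
  show nz: "\<not> int (p*p) dvd D" if "X \<noteq> {}"
  proof
    assume d: "int (p*p) dvd D"
    have "zz p (int t * D) = 1" for t
      using zz_eq_1_iff[OF p0] d by (simp add: power2_eq_square)
    hence "(\<Sum>t\<in>X. zz p (int t * D)) = of_nat (card X)" by simp
    thus False using s that fin by simp
  qed
  show "\<forall>t\<in>X. (t + p) mod (p*p) \<in> X" if nd: "\<not> int p dvd D"
  proof
    fix t assume t: "t \<in> X"
    define t' where "t' = (t + p) mod (p*p)"
    have t'lt: "t' < p*p" unfolding t'_def using p0 by simp
    define j0 where "j0 = nat (f t mod int (p*p))"
    define j1 where "j1 = nat (f t' mod int (p*p))"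
    have j0lt: "j0 < p*p" unfolding j0_def using p0 by (simp add: nat_less_iff)
    have j1lt: "j1 < p*p" unfolding j1_def using p0 by (simp add: nat_less_iff)
    have "f t' mod int p = f t mod int p"
    proof -
      have "int t' mod int p = (int (t + p) mod int (p*p)) mod int p" unfolding t'_def
        by (simp only: of_nat_mod)
      also have "\<dots> = int (t + p) mod int p" by (rule mod_mod_cancel) simp
      also have "\<dots> = int t mod int p" by simp
      finally have "int t' mod int p = int t mod int p" .
      thus ?thesis unfolding f_def by (rule mod_mult_cong) simp
    qed
    hence "int (j1 mod p) = int (j0 mod p)" unfolding j0_def j1_def using nat_mod_aux[OF p0] by simp
    hence "j1 mod p = j0 mod p" by simp
    hence ceq: "card {x\<in>X. nat (f x mod int (p*p)) = j1} = card {x\<in>X. nat (f x mod int (p*p)) = j0}"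
      using VS(1)[rule_format, OF j1lt j0lt] by blast
    have "t \<in> {x\<in>X. nat (f x mod int (p*p)) = j0}" using t j0_def by simp
    hence "card {x\<in>X. nat (f x mod int (p*p)) = j0} > 0" using fin by (auto simp: card_gt_0_iff)
    hence "card {x\<in>X. nat (f x mod int (p*p)) = j1} > 0" using ceq by simp
    hence "{x\<in>X. nat (f x mod int (p*p)) = j1} \<noteq> {}" by (metis card.empty less_irrefl)
    then obtain t'' where t'': "t'' \<in> X" "nat (f t'' mod int (p*p)) = j1" by auto
    moreover have "f t'' mod int (p*p) \<ge> 0" "f t' mod int (p*p) \<ge> 0" using p0 by simp_all
    ultimately have "f t'' mod int (p*p) = f t' mod int (p*p)" unfolding j1_def by simp
    hence "int (p*p) dvd (int t'' - int t') * D" unfolding f_def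
      by (simp add: mod_eq_dvd_iff algebra_simps)
    hence "int (p*p) dvd (int t'' - int t')"
      using coprime_pp[OF pr nd] by (metis coprime_commute coprime_dvd_mult_left_iff)
    hence "int t'' mod int (p*p) = int t' mod int (p*p)" by (simp add: mod_eq_dvd_iff)
    hence "int (t'' mod (p*p)) = int (t' mod (p*p))" by (metis of_nat_mod)
    hence "t'' mod (p*p) = t' mod (p*p)" by (metis of_nat_eq_iff)
    moreover have "t'' < p*p" using X t''(1) by auto
    ultimately have "t'' = t'" using t'lt by simp
    thus "(t + p) mod (p*p) \<in> X" using t'' t'_def by simp
  qed
  show "\<forall>r<p. card {t\<in>X. t mod p = r} = card {t\<in>X. t mod p = 0}" if dv: "int p dvd D"
  proof (cases "X = {}")
    case True thus ?thesis by simp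
  next
    case False
    obtain D' where D': "D = int p * D'" using dv by (auto elim!: dvdE)
    have nd': "\<not> int p dvd D'"
    proof
      assume "int p dvd D'"
      hence "int (p*p) dvd D" unfolding D' by simp
      thus False using nz False by blast
    qed
    have fib: "{t\<in>X. t mod p = r} = {t\<in>X. nat (f t mod int (p*p)) = p * nat ((int r * D') mod int p)}"
      if r: "r < p" for r
    proof -
      have fm: "f t mod int (p*p) = int p * ((int t * D') mod int p)" for t
      proof -
        have "f t = int p * (int t * D')" unfolding f_def D' by (simp add: algebra_simps)
        thus ?thesis by (simp only: of_nat_mult mod_mult_mult1)
      qed
      have "t mod p = r \<longleftrightarrow> (int t * D') mod int p = (int r * D') mod int p" for t
      proof
        assume "t mod p = r"
        hence "int t mod int p = int r mod int p" using r by (simp add: zmod_int[symmetric])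
        thus "(int t * D') mod int p = (int r * D') mod int p" by (rule mod_mult_cong) simp
      next
        assume "(int t * D') mod int p = (int r * D') mod int p"
        hence "int p dvd (int t - int r) * D'" by (simp add: mod_eq_dvd_iff algebra_simps)
        hence "int p dvd (int t - int r)"
          using prime_dvd_mult_iff[OF prime_int_p[OF pr]] nd' by blast
        hence "int t mod int p = int r mod int p" by (simp add: mod_eq_dvd_iff)
        thus "t mod p = r" using r by (simp add: zmod_int[symmetric])
      qed
      moreover have "nat (f t mod int (p*p)) = p * nat ((int r * D') mod int p) \<longleftrightarrow>
                     (int t * D') mod int p = (int r * D') mod int p" for t
        unfolding fm using p0 nat_mult_eq[OF p0, of "(int t * D') mod int p" "nat ((int r * D') mod int p)"] by simp
      ultimately show ?thesis by auto
    qed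
    show ?thesis
    proof (intro allI impI)
      fix r assume r: "r < p"
      define jr where "jr = p * nat ((int r * D') mod int p)"
      have jrlt: "jr < p*p" unfolding jr_def using p0 by (simp add: nat_less_iff)
      have j0: "p * nat ((int 0 * D') mod int p) = 0" by simp
      have "card {t\<in>X. t mod p = r} = card {x\<in>X. nat (f x mod int (p*p)) = jr}" using fib[OF r] jr_def by simp
      also have "\<dots> = card {x\<in>X. nat (f x mod int (p*p)) = 0}"
        using VS(1)[rule_format, OF jrlt, of 0] p0 unfolding jr_def by simp
      also have "\<dots> = card {t\<in>X. t mod p = 0}" using fib[of 0] p0 by simp
      finally show "card {t\<in>X. t mod p = r} = card {t\<in>X. t mod p = 0}" .
    qed
  qed
qed

lemma ZN:
  fixes D1 D2 :: int
  assumes pr: "prime p" and X: "X \<subseteq> {..<p} \<times> {..<p}"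
    and s: "(\<Sum>x\<in>X. zz p (int p * (int (fst x) * D1 + int (snd x) * D2))) = 0"
  shows "p dvd card X"
    and "X \<noteq> {} \<Longrightarrow> \<not> (int p dvd D1 \<and> int p dvd D2)"
    and "\<forall>k<p. card {x\<in>X. (int (fst x) * D1 + int (snd x) * D2) mod int p = int k}
                 = card {x\<in>X. (int (fst x) * D1 + int (snd x) * D2) mod int p = 0}"
proof -
  have p0: "p > 0" using pr prime_gt_0_nat by blast
  have p2: "p \<ge> 2" using pr prime_ge_2_nat by blast
  have fin: "finite X" using X finite_subset by (metis finite_SigmaI finite_lessThan)
  define ph where "ph x = int (fst x) * D1 + int (snd x) * D2" for x :: "nat \<times> nat"
  define f where "f x = int p * ph x" for x
  note VS = VS_count[OF pr fin s[folded ph_def, folded f_def]]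
  show "p dvd card X" by (rule VS(2))
  have fib: "{x\<in>X. ph x mod int p = int k} = {x\<in>X. nat (f x mod int (p*p)) = p * k}" for k
  proof -
    have "f x mod int (p*p) = int p * (ph x mod int p)" for x
      unfolding f_def by (simp only: of_nat_mult mod_mult_mult1)
    moreover have "nat (int p * (ph x mod int p)) = p * k \<longleftrightarrow> ph x mod int p = int k" for x
      using p0 by (intro nat_mult_eq) simp_all
    ultimately show ?thesis by auto
  qed
  have eq: "\<forall>k<p. card {x\<in>X. ph x mod int p = int k} = card {x\<in>X. ph x mod int p = 0}"
  proof (intro allI impI)
    fix k assume k: "k < p"
    have "p*k < p*p" using k p0 by simp
    hence "card {x\<in>X. nat (f x mod int (p*p)) = p * k} = card {x\<in>X. nat (f x mod int (p*p)) = p * 0}"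
      using VS(1)[rule_format, of "p*k" 0] p0 by simp
    thus "card {x\<in>X. ph x mod int p = int k} = card {x\<in>X. ph x mod int p = 0}"
      using fib[of k] fib[of 0] by simp
  qed
  thus "\<forall>k<p. card {x\<in>X. (int (fst x) * D1 + int (snd x) * D2) mod int p = int k}
                 = card {x\<in>X. (int (fst x) * D1 + int (snd x) * D2) mod int p = 0}"
    unfolding ph_def .
  show "\<not> (int p dvd D1 \<and> int p dvd D2)" if ne: "X \<noteq> {}"
  proof
    assume d: "int p dvd D1 \<and> int p dvd D2"
    hence "ph x mod int p = 0" for x unfolding ph_def by auto
    hence e1: "{x\<in>X. ph x mod int p = int 1} = {}" and e0: "{x\<in>X. ph x mod int p = 0} = X" by auto
    have lt1: "1 < p" using p2 by simp
    have "card {x\<in>X. ph x mod int p = int 1} = card {x\<in>X. ph x mod int p = 0}"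
      using eq lt1 by blast
    hence "card X = 0" unfolding e1 e0 by simp
    thus False using ne fin by simp
  qed
qed


lemma sum_apply_fun: "(sum F t) x = (\<Sum>w\<in>t. F w x)"
  for F :: "'b \<Rightarrow> 'a \<Rightarrow> 'c::comm_monoid_add"
  by (induction t rule: infinite_finite_induct) auto

lemma span_card:
  fixes phi :: "'b \<Rightarrow> 'a \<Rightarrow> complex"
  assumes fA: "finite A" and fB: "finite B"
    and sp: "\<forall>f :: 'a \<Rightarrow> complex. \<exists>c. \<forall>a\<in>A. f a = (\<Sum>b\<in>B. c b * phi b a)"
  shows "card A \<le> card B"
proof -
  interpret V: vector_space "\<lambda>(c::complex) (f::'a \<Rightarrow> complex) x. c * f x"
    by unfold_locales (auto simp: fun_eq_iff algebra_simps)
  define dl where "dl (a::'a) = (\<lambda>x. if x = a then (1::complex) else 0)" for a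
  define r where "r b = (\<lambda>x. if x \<in> A then phi b x else 0)" for b
  have indep: "V.independent (dl ` A)"
    unfolding V.independent_explicit_module
  proof (intro allI impI, rule ccontr)
    fix t u v assume t: "finite t" "t \<subseteq> dl ` A" and s: "(\<Sum>v\<in>t. (\<lambda>x. u v * v x)) = 0"
      and v: "v \<in> t" "u v \<noteq> 0"
    obtain a where a: "a \<in> A" "v = dl a" using t v by auto
    have "0 = (\<Sum>w\<in>t. (\<lambda>x. u w * w x)) a" using s by simp
    also have "\<dots> = (\<Sum>w\<in>t. u w * w a)" by (simp add: sum_apply_fun)
    also have "\<dots> = u v * v a + (\<Sum>w\<in>t-{v}. u w * w a)" using t v by (simp add: sum.remove)
    also have "(\<Sum>w\<in>t-{v}. u w * w a) = 0"
    proof (rule sum.neutral, rule ballI)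
      fix w assume w: "w \<in> t - {v}"
      then obtain a' where a': "a' \<in> A" "w = dl a'" using t by auto
      hence "a' \<noteq> a" using w a by auto
      thus "u w * w a = 0" using a' by (simp add: dl_def)
    qed
    finally have "u v = 0" using a by (simp add: dl_def)
    thus False using v by simp
  qed
  have sub: "dl ` A \<subseteq> V.span (r ` B)"
  proof
    fix w assume "w \<in> dl ` A"
    then obtain a where a: "a \<in> A" "w = dl a" by auto
    obtain c where c: "\<forall>x\<in>A. dl a x = (\<Sum>b\<in>B. c b * phi b x)" using sp by blast
    have "w = (\<Sum>b\<in>B. (\<lambda>x. c b * r b x))"
    proof (rule ext)
      fix x
      show "w x = (\<Sum>b\<in>B. (\<lambda>x. c b * r b x)) x"
        unfolding sum_apply_fun using c a by (cases "x \<in> A") (auto simp: r_def dl_def)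
    qed
    also have "\<dots> \<in> V.span (r ` B)"
      by (intro V.span_sum V.span_scale V.span_base) auto
    finally show "w \<in> V.span (r ` B)" .
  qed
  have "card (dl ` A) \<le> card (r ` B)"
    using V.independent_span_bound[OF finite_imageI[OF fB] indep sub] by simp
  moreover have "inj_on dl A" unfolding dl_def inj_on_def by (metis fun_upd_same fun_upd_def zero_neq_one)
  hence "card (dl ` A) = card A" by (simp add: card_image)
  moreover have "card (r ` B) \<le> card B" by (rule card_image_le[OF fB])
  ultimately show ?thesis by simp
qed

lemma spectral_card:
  assumes "spectrum_of p A B" and "finite A" and "p > 0"
  shows "card A \<le> card B"
proof -
  have "B \<subseteq> grpG p" using assms(1) unfolding spectrum_of_def by simp
  moreover have "finite (grpG p)" unfolding grpG_def by (rule finite_subset[of _ "{..<p^2} \<times> {..<p}"]) auto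
  ultimately have fB: "finite B" by (rule finite_subset)
  show ?thesis
    using span_card[OF assms(2) fB, of "chiG p"] assms(1) unfolding spectrum_of_def by blast
qed

lemma grpG_eq: "grpG p = {..<p^2} \<times> {..<p}"
  unfolding grpG_def by auto

lemma finite_G: "finite (grpG p)" unfolding grpG_eq by simp

lemma card_G: "card (grpG p) = p^3"
  unfolding grpG_eq by (simp add: card_cartesian_product power2_eq_square power3_eq_cube)

lemma gadd_in: "p > 0 \<Longrightarrow> gadd p x y \<in> grpG p"
  unfolding gadd_def grpG_def by simp

lemma chi_sym: "chiG p b a = chiG p a b"
  unfolding chiG_def by (simp add: mult.commute)

lemma mod_pp_cong:
  fixes y d :: int
  assumes "p > 0"
  shows "(int p * ((y mod int p) * d)) mod int (p*p) = (int p * (y * d)) mod int (p*p)"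
proof -
  have "(int p * ((y mod int p) * d)) mod int (p*p) = int p * (((y mod int p) * d) mod int p)"
    by (simp only: of_nat_mult mod_mult_mult1)
  also have "((y mod int p) * d) mod int p = (y * d) mod int p" by (rule mod_mult_cong) simp_all
  also have "int p * ((y * d) mod int p) = (int p * (y * d)) mod int (p*p)"
    by (simp only: of_nat_mult mod_mult_mult1)
  finally show ?thesis .
qed

lemma chi_hom:
  assumes p0: "p > 0"
  shows "chiG p d (gadd p a t) = chiG p d a * chiG p d t"
proof -
  define x where "x = int (((fst a + fst t) mod p^2) * fst d) + int p * int (((snd a + snd t) mod p) * snd d)"
  define y where "y = int ((fst a + fst t) * fst d) + int p * int ((snd a + snd t) * snd d)"
  have "x mod int (p*p) = y mod int (p*p)"
  proof -
    have e1: "int (((fst a + fst t) mod p^2) * fst d) mod int (p*p) = int ((fst a + fst t) * fst d) mod int (p*p)"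
    proof -
      have h: "int ((fst a + fst t) mod p^2) = (int (fst a + fst t)) mod int (p*p)"
        by (simp only: of_nat_mod power2_eq_square)
      have "int (((fst a + fst t) mod p^2) * fst d) = (int (fst a + fst t) mod int (p*p)) * int (fst d)"
        by (simp only: of_nat_mult h)
      hence "int (((fst a + fst t) mod p^2) * fst d) mod int (p*p) = (int (fst a + fst t) * int (fst d)) mod int (p*p)"
        by (simp only: mod_mult_left_eq)
      thus ?thesis by (simp only: of_nat_mult)
    qed
    have e2: "(int p * int (((snd a + snd t) mod p) * snd d)) mod int (p*p) = (int p * int ((snd a + snd t) * snd d)) mod int (p*p)"
      using mod_pp_cong[OF p0, of "int (snd a + snd t)" "int (snd d)"] by (simp add: of_nat_mod)
    show ?thesis unfolding x_def y_def using e1 e2 by (metis mod_add_cong)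
  qed
  hence "zz p x = zz p y" by (rule zz_mod_eq2[OF p0])
  moreover have "chiG p d (gadd p a t) = zz p x" unfolding x_def chi_zz[OF p0] gadd_def by simp
  moreover have "chiG p d a * chiG p d t = zz p y"
    unfolding y_def chi_zz[OF p0] zz_add[symmetric] by (simp add: algebra_simps)
  ultimately show ?thesis by simp
qed

lemma pp_dvd_small:
  fixes m :: int
  assumes "int n dvd m" and "\<bar>m\<bar> < int n"
  shows "m = 0"
proof (rule ccontr)
  assume "m \<noteq> 0"
  hence "\<bar>int n\<bar> \<le> \<bar>m\<bar>" using assms(1) by (rule dvd_imp_le_int)
  thus False using assms(2) by simp
qed

lemma chi_prod_zz:
  assumes p0: "p > 0"
  shows "chiG p x d * cnj (chiG p y d) =
         zz p (int (fst d) * (int (fst x) - int (fst y))) * zz p (int (snd d) * (int p * (int (snd x) - int (snd y))))"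
proof -
  have "chiG p x d * cnj (chiG p y d) =
        zz p ((int (fst d * fst x) + int p * int (snd d * snd x)) - (int (fst d * fst y) + int p * int (snd d * snd y)))"
    unfolding chi_zz[OF p0] zz_diff by simp
  also have "(int (fst d * fst x) + int p * int (snd d * snd x)) - (int (fst d * fst y) + int p * int (snd d * snd y))
      = int (fst d) * (int (fst x) - int (fst y)) + int (snd d) * (int p * (int (snd x) - int (snd y)))"
    by (simp add: algebra_simps)
  finally show ?thesis by (simp add: zz_add)
qed

lemma orthG:
  assumes p0: "p > 0" and x: "x \<in> grpG p" and y: "y \<in> grpG p"
  shows "(\<Sum>d\<in>grpG p. chiG p x d * cnj (chiG p y d)) = (if x = y then of_nat (p^3) else 0)"
proof -
  define m1 where "m1 = int (fst x) - int (fst y)"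
  define m2 where "m2 = int p * (int (snd x) - int (snd y))"
  have "(\<Sum>d\<in>grpG p. chiG p x d * cnj (chiG p y d)) =
        (\<Sum>d\<in>{..<p^2} \<times> {..<p}. zz p (int (fst d) * m1) * zz p (int (snd d) * m2))"
    unfolding grpG_eq m1_def m2_def by (intro sum.cong refl) (rule chi_prod_zz[OF p0])
  also have "\<dots> = (\<Sum>d1<p^2. zz p (int d1 * m1)) * (\<Sum>d2<p. zz p (int d2 * m2))"
    by (simp add: sum_product sum.cartesian_product split_def)
  finally have eq: "(\<Sum>d\<in>grpG p. chiG p x d * cnj (chiG p y d)) =
     (\<Sum>d1<p^2. zz p (int d1 * m1)) * (\<Sum>d2<p. zz p (int d2 * m2))" .
  show ?thesis
  proof (cases "x = y")
    case True
    hence "m1 = 0" "m2 = 0" unfolding m1_def m2_def by simp_all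
    thus ?thesis using eq True by (simp add: power2_eq_square power3_eq_cube)
  next
    case False
    hence "fst x \<noteq> fst y \<or> snd x \<noteq> snd y" by (auto simp: prod_eq_iff)
    thus ?thesis
    proof
      assume ne: "fst x \<noteq> fst y"
      have "(\<Sum>d1<p^2. zz p (int d1 * m1)) = 0"
      proof (rule zz_geom)
        show "zz p m1 \<noteq> 1"
        proof
          assume "zz p m1 = 1"
          hence "int (p^2) dvd m1" using zz_eq_1_iff[OF p0] by blast
          moreover have "\<bar>m1\<bar> < int (p^2)"
          proof -
            have "fst x < p^2" "fst y < p^2" using x y by (auto simp: grpG_def)
            thus ?thesis unfolding m1_def by linarith
          qed
          ultimately have "m1 = 0" by (rule pp_dvd_small)
          thus False using ne unfolding m1_def by simp
        qed
        show "zz p (int (p^2) * m1) = 1" using zz_eq_1_iff[OF p0] by simp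
      qed
      thus ?thesis using eq False by simp
    next
      assume ne: "snd x \<noteq> snd y"
      have "(\<Sum>d2<p. zz p (int d2 * m2)) = 0"
      proof (rule zz_geom)
        show "zz p m2 \<noteq> 1"
        proof
          assume "zz p m2 = 1"
          hence "int (p*p) dvd int p * (int (snd x) - int (snd y))" using zz_eq_1_iff[OF p0] m2_def
            by (simp add: power2_eq_square)
          hence "int p dvd (int (snd x) - int (snd y))" using p0 by simp
          moreover have "\<bar>int (snd x) - int (snd y)\<bar> < int p" using x y by (auto simp: grpG_def)
          ultimately have "int (snd x) - int (snd y) = 0" by (rule pp_dvd_small)
          thus False using ne by simp
        qed
        show "zz p (int p * m2) = 1" using zz_eq_1_iff[OF p0] unfolding m2_def
          by (simp add: power2_eq_square algebra_simps)
      qed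
      thus ?thesis using eq False by simp
    qed
  qed
qed

definition hat :: "nat \<Rightarrow> (nat \<times> nat) set \<Rightarrow> nat \<times> nat \<Rightarrow> complex" where
  "hat p X d = (\<Sum>y\<in>X. chiG p d y)"

lemma chi_zero: "p > 0 \<Longrightarrow> chiG p (0,0) a = 1"
  by (simp add: chi_zz)

lemma sum_chi_G:
  assumes p0: "p > 0" and d: "d \<in> grpG p" "d \<noteq> (0,0)"
  shows "(\<Sum>g\<in>grpG p. chiG p d g) = 0"
proof -
  have z: "(0,0) \<in> grpG p" using p0 by (simp add: grpG_def)
  have "(\<Sum>g\<in>grpG p. chiG p d g) = (\<Sum>g\<in>grpG p. chiG p d g * cnj (chiG p (0,0) g))"
    using chi_zero[OF p0] by (simp add: chi_sym[of p "(0,0)"])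
  also have "\<dots> = 0" using orthG[OF p0 d(1) z] d(2) by simp
  finally show ?thesis .
qed

lemma INV:
  assumes p0: "p > 0" and X: "X \<subseteq> grpG p" and x: "x \<in> grpG p"
  shows "(\<Sum>d\<in>grpG p. hat p X d * cnj (chiG p d x)) = (if x \<in> X then of_nat (p^3) else 0)"
proof -
  have fX: "finite X" using X finite_G finite_subset by blast
  have "(\<Sum>d\<in>grpG p. hat p X d * cnj (chiG p d x)) = (\<Sum>d\<in>grpG p. \<Sum>y\<in>X. chiG p y d * cnj (chiG p x d))"
    unfolding hat_def sum_distrib_right by (intro sum.cong refl) (metis chi_sym)
  also have "\<dots> = (\<Sum>y\<in>X. \<Sum>d\<in>grpG p. chiG p y d * cnj (chiG p x d))" by (rule sum.swap)
  also have "\<dots> = (\<Sum>y\<in>X. if y = x then of_nat (p^3) else 0)"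
  proof (intro sum.cong refl)
    fix y assume "y \<in> X"
    hence yG: "y \<in> grpG p" using X by auto
    show "(\<Sum>d\<in>grpG p. chiG p y d * cnj (chiG p x d)) = (if y = x then of_nat (p^3) else 0)"
      by (rule orthG[OF p0 yG x])
  qed
  also have "\<dots> = (if x \<in> X then of_nat (p^3) else 0)" using fX by (simp add: sum.delta')
  finally show ?thesis .
qed

lemma hat_all_zero:
  assumes p0: "p > 0" and X: "X \<subseteq> grpG p" and ne: "X \<noteq> {}"
    and z: "\<forall>d\<in>grpG p. d \<noteq> (0,0) \<longrightarrow> hat p X d = 0"
  shows "X = grpG p"
proof -
  have z0: "(0,0) \<in> grpG p" using p0 by (simp add: grpG_def)
  have "(\<Sum>d\<in>grpG p. hat p X d * cnj (chiG p d x)) = hat p X (0,0)" if "x \<in> grpG p" for x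
  proof -
    have "(\<Sum>d\<in>grpG p. hat p X d * cnj (chiG p d x)) = hat p X (0,0) * cnj (chiG p (0,0) x)
          + (\<Sum>d\<in>grpG p - {(0,0)}. hat p X d * cnj (chiG p d x))"
      using z0 finite_G by (simp add: sum.remove)
    also have "(\<Sum>d\<in>grpG p - {(0,0)}. hat p X d * cnj (chiG p d x)) = 0" using z by simp
    finally show ?thesis using chi_zero[OF p0] by simp
  qed
  hence e: "(if x \<in> X then of_nat (p^3) else 0) = hat p X (0,0)" if "x \<in> grpG p" for x
    using INV[OF p0 X that] that by simp
  obtain x0 where x0: "x0 \<in> X" using ne by auto
  have H: "hat p X (0,0) = of_nat (p^3)" using e[of x0] x0 X by auto
  have nz: "of_nat (p^3) \<noteq> (0::complex)" using p0 by (simp del: of_nat_power)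
  show ?thesis
  proof
    show "grpG p \<subseteq> X"
    proof
      fix x assume x: "x \<in> grpG p"
      show "x \<in> X"
      proof (rule ccontr)
        assume "x \<notin> X"
        hence "(0::complex) = of_nat (p^3)" using e[OF x] H by simp
        thus False using nz by simp
      qed
    qed
  qed (rule X)
qed

lemma tile_facts:
  assumes p0: "p > 0" and t: "tile p A" and A: "A \<subseteq> grpG p"
  obtains T where "T \<subseteq> grpG p" "card A * card T = p^3"
    "\<forall>d\<in>grpG p. d \<noteq> (0,0) \<longrightarrow> hat p A d * hat p T d = 0"
proof -
  obtain T where T: "T \<subseteq> grpG p"
    and u: "\<forall>g\<in>grpG p. \<exists>!u. fst u \<in> A \<and> snd u \<in> T \<and> g = gadd p (fst u) (snd u)"
    using t unfolding tile_def by blast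
  define f where "f u = gadd p (fst u) (snd u)" for u
  have bij: "bij_betw f (A \<times> T) (grpG p)"
  proof (rule bij_betw_imageI)
    show "inj_on f (A \<times> T)"
    proof (rule inj_onI)
      fix u v assume uv: "u \<in> A \<times> T" "v \<in> A \<times> T" "f u = f v"
      have "f u \<in> grpG p" unfolding f_def by (rule gadd_in[OF p0])
      thus "u = v" using u uv unfolding f_def by (metis mem_Times_iff)
    qed
    show "f ` (A \<times> T) = grpG p"
    proof
      show "f ` (A \<times> T) \<subseteq> grpG p" unfolding f_def using gadd_in[OF p0] by auto
      show "grpG p \<subseteq> f ` (A \<times> T)"
      proof
        fix g assume "g \<in> grpG p"
        then obtain w where "fst w \<in> A" "snd w \<in> T" "g = gadd p (fst w) (snd w)" using u by blast
        thus "g \<in> f ` (A \<times> T)" unfolding f_def by (auto intro!: image_eqI[of _ _ w] simp: mem_Times_iff)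
      qed
    qed
  qed
  have "card (A \<times> T) = card (grpG p)" using bij by (rule bij_betw_same_card)
  hence c: "card A * card T = p^3" by (simp add: card_cartesian_product card_G)
  have h: "hat p A d * hat p T d = 0" if d: "d \<in> grpG p" "d \<noteq> (0,0)" for d
  proof -
    have "hat p A d * hat p T d = (\<Sum>u\<in>A \<times> T. chiG p d (f u))"
      unfolding hat_def f_def sum_product sum.cartesian_product chi_hom[OF p0] by (simp add: split_def)
    also have "\<dots> = (\<Sum>g\<in>grpG p. chiG p d g)" using sum.reindex_bij_betw[OF bij] by simp
    also have "\<dots> = 0" by (rule sum_chi_G[OF p0 d])
    finally show ?thesis .
  qed
  show ?thesis using that[OF T c] h by blast
qed

lemma GENTILE:
  assumes p0: "p > 0" and A: "A \<subseteq> grpG p" and T: "T \<subseteq> grpG p"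
    and c: "card A * card T = p^3"
    and inj: "\<forall>a\<in>A. \<forall>a'\<in>A. \<forall>t\<in>T. \<forall>t'\<in>T. gadd p a t = gadd p a' t' \<longrightarrow> a = a' \<and> t = t'"
  shows "tile p A"
proof -
  define f where "f u = gadd p (fst u) (snd u)" for u
  have fin: "finite (A \<times> T)" using A T finite_G finite_subset by blast
  have injf: "inj_on f (A \<times> T)"
  proof (rule inj_onI)
    fix u v assume u: "u \<in> A \<times> T" and v: "v \<in> A \<times> T" and e: "f u = f v"
    have "fst u \<in> A" "fst v \<in> A" "snd u \<in> T" "snd v \<in> T" using u v by auto
    hence "fst u = fst v \<and> snd u = snd v" using inj e unfolding f_def by blast
    thus "u = v" by (simp add: prod_eq_iff)
  qed
  have sub: "f ` (A \<times> T) \<subseteq> grpG p" unfolding f_def using gadd_in[OF p0] by auto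
  have "card (f ` (A \<times> T)) = card (grpG p)"
    using card_image[OF injf] c by (simp add: card_cartesian_product card_G)
  hence im: "f ` (A \<times> T) = grpG p" using card_subset_eq[OF finite_G sub] by blast
  show ?thesis unfolding tile_def
  proof (intro exI[of _ T] conjI T ballI)
    fix g assume "g \<in> grpG p"
    then obtain w where w: "w \<in> A \<times> T" "g = f w" using im by (metis imageE)
    show "\<exists>!u. fst u \<in> A \<and> snd u \<in> T \<and> g = gadd p (fst u) (snd u)"
    proof (rule ex1I[of _ w])
      show "fst w \<in> A \<and> snd w \<in> T \<and> g = gadd p (fst w) (snd w)" using w unfolding f_def by auto
      fix v assume "fst v \<in> A \<and> snd v \<in> T \<and> g = gadd p (fst v) (snd v)"
      hence "v \<in> A \<times> T" "f v = f w" using w unfolding f_def by (auto simp: mem_Times_iff)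
      thus "v = w" using w(1) injf by (simp add: inj_on_eq_iff)
    qed
  qed
qed

lemma GENSPEC:
  assumes p0: "p > 0" and fI: "finite I" and I: "I \<noteq> {}" and b: "\<forall>i\<in>I. b i \<in> grpG p"
    and fA: "finite A" and A: "A \<noteq> {}"
    and orth: "\<forall>i\<in>I. \<forall>j\<in>I. i \<noteq> j \<longrightarrow> (\<Sum>a\<in>A. chiG p (b i) a * cnj (chiG p (b j) a)) = 0"
    and dual: "\<forall>a\<in>A. \<forall>a'\<in>A. a \<noteq> a' \<longrightarrow> (\<Sum>i\<in>I. chiG p (b i) a * cnj (chiG p (b i) a')) = 0"
  shows "spectral_set p A"
proof -
  have one: "chiG p d a * cnj (chiG p d a) = 1" for d a unfolding chi_zz[OF p0] by simp
  have injb: "inj_on b I"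
  proof (rule inj_onI)
    fix i j assume ij: "i \<in> I" "j \<in> I" "b i = b j"
    show "i = j"
    proof (rule ccontr)
      assume "i \<noteq> j"
      hence "(\<Sum>a\<in>A. chiG p (b i) a * cnj (chiG p (b j) a)) = 0" using orth ij by blast
      moreover have "(\<Sum>a\<in>A. chiG p (b i) a * cnj (chiG p (b j) a)) = of_nat (card A)"
        using ij(3) one by simp
      ultimately show False using fA A by simp
    qed
  qed
  define N where "N = card I"
  have N0: "N > 0" unfolding N_def using fI I by (simp add: card_gt_0_iff)
  show ?thesis unfolding spectral_set_def spectrum_of_def
  proof (intro exI[of _ "b ` I"] conjI)
    show "b ` I \<subseteq> grpG p" using b by auto
    show "\<forall>x\<in>b ` I. \<exists>a\<in>A. chiG p x a \<noteq> 0" using A by (auto simp: chi_zz[OF p0])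
    show "\<forall>x\<in>b ` I. \<forall>y\<in>b ` I. x \<noteq> y \<longrightarrow> innerA A (chiG p x) (chiG p y) = 0"
      unfolding innerA_def using orth by auto
    show "\<forall>f. \<exists>c. \<forall>a\<in>A. f a = (\<Sum>x\<in>b ` I. c x * chiG p x a)"
    proof
      fix f :: "nat \<times> nat \<Rightarrow> complex"
      define c where "c x = (\<Sum>a'\<in>A. f a' * cnj (chiG p x a')) / of_nat N" for x
      show "\<exists>c. \<forall>a\<in>A. f a = (\<Sum>x\<in>b ` I. c x * chiG p x a)"
      proof (intro exI[of _ c] ballI)
        fix a assume a: "a \<in> A"
        have "(\<Sum>x\<in>b ` I. c x * chiG p x a) = (\<Sum>i\<in>I. c (b i) * chiG p (b i) a)"
          by (rule sum.reindex[OF injb, unfolded comp_def])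
        also have "\<dots> = (\<Sum>a'\<in>A. f a' * (\<Sum>i\<in>I. chiG p (b i) a * cnj (chiG p (b i) a'))) / of_nat N"
          unfolding c_def by (simp add: sum_divide_distrib sum_distrib_left sum_distrib_right algebra_simps)
            (subst sum.swap, simp)
        also have "(\<Sum>a'\<in>A. f a' * (\<Sum>i\<in>I. chiG p (b i) a * cnj (chiG p (b i) a'))) =
                   (\<Sum>a'\<in>A. if a' = a then f a * of_nat N else 0)"
        proof (intro sum.cong refl)
          fix a' assume a': "a' \<in> A"
          show "f a' * (\<Sum>i\<in>I. chiG p (b i) a * cnj (chiG p (b i) a')) = (if a' = a then f a * of_nat N else 0)"
          proof (cases "a' = a")
            case True thus ?thesis using one by (simp add: N_def)
          next
            case False thus ?thesis using dual a a' by auto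
          qed
        qed
        also have "\<dots> = f a * of_nat N" using fA a by (simp add: sum.delta')
        finally show "f a = (\<Sum>x\<in>b ` I. c x * chiG p x a)" using N0 by simp
      qed
    qed
  qed
qed


definition Kinf :: "nat \<Rightarrow> (nat \<times> nat) set" where
  "Kinf p = {a \<in> grpG p. p dvd fst a}"

definition Klam :: "nat \<Rightarrow> nat \<Rightarrow> (nat \<times> nat) set" where
  "Klam p l = {a \<in> grpG p. snd a = (l * fst a) mod p}"

lemma mul_in_H:
  assumes p0: "p > 0" and H: "is_subgroupG p H" and x: "x \<in> H"
  shows "((k * fst x) mod p^2, (k * snd x) mod p) \<in> H"
proof (induction k)
  case 0 thus ?case using H unfolding is_subgroupG_def by simp
next
  case (Suc k)
  have "gadd p ((k * fst x) mod p^2, (k * snd x) mod p) x \<in> H"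
    using H Suc x unfolding is_subgroupG_def by blast
  moreover have "gadd p ((k * fst x) mod p^2, (k * snd x) mod p) x = ((Suc k * fst x) mod p^2, (Suc k * snd x) mod p)"
    unfolding gadd_def by (simp add: mod_add_left_eq mod_add_right_eq add.commute)
  ultimately show ?case by simp
qed

lemma small_eq_nat:
  assumes "int m dvd int a - int b" and "a < m" and "b < m"
  shows "a = b"
proof -
  have "\<bar>int a - int b\<bar> < int m" using assms(2,3) by linarith
  hence "int a - int b = 0" using pp_dvd_small[OF assms(1)] by blast
  thus ?thesis by simp
qed

lemma mod_nat_dvd: "m > 0 \<Longrightarrow> int m dvd int (nat (x mod int m)) - x"
  by (simp add: mod_eq_dvd_iff[symmetric] algebra_simps)

lemma dvd_comb2: "(k::int) dvd a \<Longrightarrow> k dvd b \<Longrightarrow> k dvd a * c + b * d"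
  by (intro dvd_add dvd_mult2)

lemma dvd_comb3: "(k::int) dvd a \<Longrightarrow> k dvd b \<Longrightarrow> k dvd c \<Longrightarrow> k dvd x * a + y * b + c"
  by (intro dvd_add dvd_mult)

lemma dvd_mod_nat_diff:
  assumes "m > 0" and "int m dvd int z - y"
  shows "int m dvd int (z mod m) - y"
proof -
  have "int m dvd int z - int z mod int m" by (simp add: minus_mod_eq_mult_div)
  moreover have "int (z mod m) - y = (int z - y) - (int z - int z mod int m)" by (simp add: of_nat_mod)
  ultimately show ?thesis using assms(2) by (metis dvd_diff)
qed

lemma SUB:
  assumes pr: "prime p" and H: "is_subgroupG p H" and HG: "H \<noteq> grpG p"
  shows "H \<subseteq> Kinf p \<or> (\<exists>l<p. H \<subseteq> Klam p l)"
proof (rule ccontr)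
  assume nc: "\<not> (H \<subseteq> Kinf p \<or> (\<exists>l<p. H \<subseteq> Klam p l))"
  have p0: "p > 0" using pr prime_gt_0_nat by blast
  have HsG: "H \<subseteq> grpG p" using H unfolding is_subgroupG_def by simp
  obtain h where h: "h \<in> H" "\<not> p dvd fst h" using nc HsG unfolding Kinf_def by auto
  have pi: "prime (int p)" using pr by simp
  have cop1: "coprime (int (fst h)) (int p)"
    using h(2) pi by (metis coprime_commute int_dvd_int_iff prime_imp_coprime)
  obtain i1 where i1: "[int (fst h) * i1 = 1] (mod int p)" using cong_solve_coprime_int[OF cop1] by blast
  have cop2: "coprime (int (fst h)) (int (p^2))" using cop1 by simp
  obtain hi where hi: "[int (fst h) * hi = 1] (mod int (p^2))" using cong_solve_coprime_int[OF cop2] by blast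
  define l where "l = nat ((int (snd h) * i1) mod int p)"
  have lp: "l < p" unfolding l_def using p0 by (simp add: nat_less_iff)
  have Ldv: "int p dvd int (snd h) - int l * int (fst h)"
  proof -
    have a: "int p dvd int l - int (snd h) * i1" unfolding l_def using mod_nat_dvd[OF p0] by blast
    have b: "int p dvd int (fst h) * i1 - 1" using i1 by (simp add: cong_iff_dvd_diff)
    have id: "int (snd h) - int l * int (fst h) = (int l - int (snd h) * i1) * (- int (fst h)) + (int (fst h) * i1 - 1) * (- int (snd h))"
      by (simp add: algebra_simps)
    show ?thesis unfolding id by (rule dvd_comb2[OF a b])
  qed
  have "\<not> H \<subseteq> Klam p l" using nc lp by blast
  then obtain g where g: "g \<in> H" "g \<notin> Klam p l" by blast
  have gG: "g \<in> grpG p" using g HsG by auto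
  define w where "w = int (snd g) - int l * int (fst g)"
  have nw: "\<not> int p dvd w"
  proof
    assume "int p dvd w"
    moreover have "int ((l * fst g) mod p) = (int l * int (fst g)) mod int p" by (simp add: of_nat_mod)
    moreover have "int p dvd (int l * int (fst g)) - (int l * int (fst g)) mod int p"
      by (simp add: minus_mod_eq_mult_div)
    ultimately have "int p dvd w + ((int l * int (fst g)) - (int l * int (fst g)) mod int p)"
      by (intro dvd_add)
    moreover have "w + ((int l * int (fst g)) - (int l * int (fst g)) mod int p) = int (snd g) - int ((l * fst g) mod p)"
      unfolding w_def by (simp add: of_nat_mod)
    ultimately have "int p dvd int (snd g) - int ((l * fst g) mod p)" by simp
    hence "snd g = (l * fst g) mod p" using gG p0 by (intro small_eq_nat) (auto simp: grpG_def)
    thus False using g gG unfolding Klam_def by simp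
  qed
  have copw: "coprime w (int p)" using nw pi by (metis coprime_commute prime_imp_coprime)
  obtain wi where wi: "[w * wi = 1] (mod int p)" using cong_solve_coprime_int[OF copw] by blast
  have "grpG p \<subseteq> H"
  proof
    fix y assume y: "y \<in> grpG p"
    define \<beta> where "\<beta> = nat (((int (snd y) - int l * int (fst y)) * wi) mod int p)"
    define \<alpha> where "\<alpha> = nat (((int (fst y) - int \<beta> * int (fst g)) * hi) mod int (p^2))"
    have E1: "int (p^2) dvd int \<alpha> * int (fst h) + int \<beta> * int (fst g) - int (fst y)"
    proof -
      have a: "int (p^2) dvd int \<alpha> - (int (fst y) - int \<beta> * int (fst g)) * hi"
        unfolding \<alpha>_def using mod_nat_dvd[of "p^2"] p0 by simp
      have b: "int (p^2) dvd int (fst h) * hi - 1" using hi by (simp add: cong_iff_dvd_diff)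
      have "int \<alpha> * int (fst h) + int \<beta> * int (fst g) - int (fst y) =
            (int \<alpha> - (int (fst y) - int \<beta> * int (fst g)) * hi) * int (fst h)
            + (int (fst h) * hi - 1) * (int (fst y) - int \<beta> * int (fst g))"
        by (simp add: algebra_simps)
      thus ?thesis using dvd_comb2[OF a b] by simp
    qed
    have E1p: "int p dvd int \<alpha> * int (fst h) + int \<beta> * int (fst g) - int (fst y)"
      using E1 by (rule dvd_trans[rotated]) simp
    have W: "int p dvd int \<beta> * w - (int (snd y) - int l * int (fst y))"
    proof -
      have a: "int p dvd int \<beta> - (int (snd y) - int l * int (fst y)) * wi"
        unfolding \<beta>_def using mod_nat_dvd[OF p0] by simp
      have b: "int p dvd w * wi - 1" using wi by (simp add: cong_iff_dvd_diff)
      have "int \<beta> * w - (int (snd y) - int l * int (fst y)) =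
            (int \<beta> - (int (snd y) - int l * int (fst y)) * wi) * w
            + (w * wi - 1) * (int (snd y) - int l * int (fst y))"
        by (simp add: algebra_simps)
      thus ?thesis using dvd_comb2[OF a b] by simp
    qed
    have E2: "int p dvd int \<alpha> * int (snd h) + int \<beta> * int (snd g) - int (snd y)"
    proof -
      have id: "int \<alpha> * int (snd h) + int \<beta> * int (snd g) - int (snd y) =
            int \<alpha> * (int (snd h) - int l * int (fst h))
            + int l * (int \<alpha> * int (fst h) + int \<beta> * int (fst g) - int (fst y))
            + (int \<beta> * w - (int (snd y) - int l * int (fst y)))"
        unfolding w_def by (simp add: algebra_simps)
      show ?thesis unfolding id by (rule dvd_comb3[OF Ldv E1p W])
    qed
    have m1: "((\<alpha> * fst h) mod p^2, (\<alpha> * snd h) mod p) \<in> H" by (rule mul_in_H[OF p0 H h(1)])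
    have m2: "((\<beta> * fst g) mod p^2, (\<beta> * snd g) mod p) \<in> H" by (rule mul_in_H[OF p0 H g(1)])
    have "gadd p ((\<alpha> * fst h) mod p^2, (\<alpha> * snd h) mod p) ((\<beta> * fst g) mod p^2, (\<beta> * snd g) mod p) \<in> H"
      using H m1 m2 unfolding is_subgroupG_def by blast
    moreover have "gadd p ((\<alpha> * fst h) mod p^2, (\<alpha> * snd h) mod p) ((\<beta> * fst g) mod p^2, (\<beta> * snd g) mod p) = y"
    proof -
      have c1: "(\<alpha> * fst h + \<beta> * fst g) mod p^2 = fst y"
      proof -
        have "int (p^2) dvd int ((\<alpha> * fst h + \<beta> * fst g) mod p^2) - int (fst y)"
          using E1 p0 by (intro dvd_mod_nat_diff) simp_all
        moreover have "fst y < p^2" using y by (auto simp: grpG_def)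
        ultimately show ?thesis using p0 by (intro small_eq_nat[of "p^2"]) auto
      qed
      have c2: "(\<alpha> * snd h + \<beta> * snd g) mod p = snd y"
      proof -
        have "int p dvd int ((\<alpha> * snd h + \<beta> * snd g) mod p) - int (snd y)"
          using E2 p0 by (intro dvd_mod_nat_diff) simp_all
        moreover have "snd y < p" using y by (auto simp: grpG_def)
        ultimately show ?thesis using p0 by (intro small_eq_nat[of p]) auto
      qed
      show ?thesis unfolding gadd_def using c1 c2 by (simp add: mod_add_eq prod_eq_iff)
    qed
    ultimately show "y \<in> H" by simp
  qed
  thus False using HsG HG by auto
qed


lemma geo_pp:
  assumes p0: "p > 0" and m0: "m \<noteq> 0" and mb: "\<bar>m\<bar> < int (p*p)"
  shows "(\<Sum>k<p*p. zz p (int k * m)) = 0"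
proof (rule zz_geom)
  show "zz p m \<noteq> 1"
  proof
    assume "zz p m = 1"
    hence "int (p*p) dvd m" using zz_eq_1_iff[OF p0] by (simp add: power2_eq_square)
    thus False using pp_dvd_small[of "p*p" m] mb m0 by blast
  qed
  show "zz p (int (p*p) * m) = 1" using zz_eq_1_iff[OF p0] by (simp add: power2_eq_square)
qed

lemma geo_p:
  assumes p0: "p > 0" and nd: "\<not> int p dvd m"
  shows "(\<Sum>k<p. zz p (int k * (int p * m))) = 0"
proof (rule zz_geom)
  show "zz p (int p * m) \<noteq> 1"
  proof
    assume "zz p (int p * m) = 1"
    hence "int p * int p dvd int p * m" using zz_eq_1_iff[OF p0] by (simp add: power2_eq_square)
    hence "int p dvd m" using p0 by simp
    thus False using nd by simp
  qed
  show "zz p (int p * (int p * m)) = 1" using zz_eq_1_iff[OF p0]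
    by (simp add: power2_eq_square algebra_simps)
qed

lemma card_fiber_sum:
  fixes f :: "'x \<Rightarrow> nat"
  assumes fin: "finite X" and lt: "\<forall>x\<in>X. f x < p"
  shows "card X = (\<Sum>k<p. card {x\<in>X. f x = k})"
proof -
  have "int (card X) = (\<Sum>x\<in>X. (\<lambda>j. (1::int)) (f x))" by simp
  also have "\<dots> = (\<Sum>k<p. int (card {x\<in>X. f x = k}))"
    using sum_by_fiber[OF fin lt, of "\<lambda>j. (1::int)"] by simp
  also have "\<dots> = int (\<Sum>k<p. card {x\<in>X. f x = k})" by simp
  finally show ?thesis by (simp only: of_nat_eq_iff)
qed

lemma fiber_inj:
  fixes f :: "'x \<Rightarrow> nat"
  assumes fin: "finite X" and c: "card X = p" and lt: "\<forall>x\<in>X. f x < p"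
    and eq: "\<forall>k<p. card {x\<in>X. f x = k} = card {x\<in>X. f x = 0}" and p0: "p > 0"
  shows "inj_on f X"
proof -
  have "card X = (\<Sum>k<p. card {x\<in>X. f x = k})" by (rule card_fiber_sum[OF fin lt])
  also have "\<dots> = (\<Sum>k<p. card {x\<in>X. f x = 0})"
    by (rule sum.cong[OF refl]) (use eq in blast)
  finally have "card X = (\<Sum>k<p. card {x\<in>X. f x = 0})" .
  hence "p = p * card {x\<in>X. f x = 0}" using c by simp
  moreover note p0
  ultimately have c0: "card {x\<in>X. f x = 0} = 1" by simp
  show ?thesis
  proof (rule inj_onI)
    fix x y assume x: "x \<in> X" and y: "y \<in> X" and e: "f x = f y"
    have "card {z\<in>X. f z = f x} = card {z\<in>X. f z = 0}" using eq lt x by blast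
    hence "card {z\<in>X. f z = f x} = 1" using c0 by simp
    then obtain z where "{z'\<in>X. f z' = f x} = {z}" by (rule card_1_singletonE)
    moreover have "x \<in> {z'\<in>X. f z' = f x}" "y \<in> {z'\<in>X. f z' = f x}" using x y e by auto
    ultimately show "x = y" by auto
  qed
qed

lemma bij_to_range:
  fixes f :: "'x \<Rightarrow> nat"
  assumes fin: "finite X" and c: "card X = p" and lt: "\<forall>x\<in>X. f x < p" and inj: "inj_on f X"
  shows "f ` X = {..<p}"
proof -
  have "f ` X \<subseteq> {..<p}" using lt by auto
  moreover have "card (f ` X) = card {..<p}" using card_image[OF inj] c by simp
  ultimately show ?thesis by (simp add: card_subset_eq)
qed

lemma two_elems:
  assumes "finite B" and "card B \<ge> 2"
  obtains b b' where "b \<in> B" "b' \<in> B" "b \<noteq> b'"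
proof -
  have "B \<noteq> {}" using assms by auto
  then obtain b where b: "b \<in> B" by auto
  have "card (B - {b}) \<ge> 1" using assms b by simp
  hence "B - {b} \<noteq> {}" by (metis card.empty not_one_le_zero)
  then obtain b' where "b' \<in> B - {b}" by auto
  thus ?thesis using that b by auto
qed

lemma gadd_cancel:
  assumes p0: "p > 0" and t: "t \<in> grpG p" and t': "t' \<in> grpG p"
    and e: "gadd p a t = gadd p a t'"
  shows "t = t'"
proof -
  have e1: "(fst a + fst t) mod p^2 = (fst a + fst t') mod p^2" and e2: "(snd a + snd t) mod p = (snd a + snd t') mod p"
    using e unfolding gadd_def by simp_all
  have "int ((fst a + fst t) mod p^2) = int ((fst a + fst t') mod p^2)" using e1 by simp
  hence "(int (fst a) + int (fst t)) mod int (p^2) = (int (fst a) + int (fst t')) mod int (p^2)"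
    by (simp only: of_nat_mod of_nat_add)
  hence "int (p^2) dvd (int (fst a) + int (fst t)) - (int (fst a) + int (fst t'))"
    by (simp only: mod_eq_dvd_iff)
  hence "int (p^2) dvd int (fst t) - int (fst t')" by simp
  hence "fst t = fst t'" using t t' by (intro small_eq_nat[of "p^2"]) (auto simp: grpG_def)
  moreover
  have "int ((snd a + snd t) mod p) = int ((snd a + snd t') mod p)" using e2 by simp
  hence "(int (snd a) + int (snd t)) mod int p = (int (snd a) + int (snd t')) mod int p"
    by (simp only: of_nat_mod of_nat_add)
  hence "int p dvd (int (snd a) + int (snd t)) - (int (snd a) + int (snd t'))"
    by (simp only: mod_eq_dvd_iff)
  hence "int p dvd int (snd t) - int (snd t')" by simp
  hence "snd t = snd t'" using t t' by (intro small_eq_nat[of p]) (auto simp: grpG_def)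
  ultimately show ?thesis by (simp add: prod_eq_iff)
qed

lemma singleton_tile_spec:
  assumes p0: "p > 0" and A: "A \<subseteq> grpG p" and c: "card A = 1"
  shows "tile p A" and "spectral_set p A"
proof -
  obtain a where a: "A = {a}" using c by (rule card_1_singletonE)
  show "tile p A"
  proof (rule GENTILE[OF p0 A order_refl])
    show "card A * card (grpG p) = p^3" using c card_G by simp
    show "\<forall>x\<in>A. \<forall>x'\<in>A. \<forall>t\<in>grpG p. \<forall>t'\<in>grpG p. gadd p x t = gadd p x' t' \<longrightarrow> x = x' \<and> t = t'"
      using a gadd_cancel[OF p0] by auto
  qed
  show "spectral_set p A"
  proof (rule GENSPEC[of p "{0::nat}" "\<lambda>_. (0,0)"])
    show "\<forall>i\<in>{0::nat}. (0::nat, 0::nat) \<in> grpG p" using p0 by (simp add: grpG_def)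
  qed (use p0 a in auto)
qed

definition emb :: "nat \<Rightarrow> nat \<Rightarrow> nat \<Rightarrow> nat \<times> nat" where
  "emb p l t = (t, (l * t) mod p)"

definition dl :: "nat \<Rightarrow> nat \<Rightarrow> nat \<times> nat \<Rightarrow> int" where
  "dl p l d = int (fst d) + int p * int l * int (snd d)"

lemma inj_emb: "inj_on (emb p l) X"
  unfolding emb_def inj_on_def by simp

lemma emb_in: "p > 0 \<Longrightarrow> t < p*p \<Longrightarrow> emb p l t \<in> grpG p"
  unfolding emb_def grpG_def by (simp add: power2_eq_square)

lemma chi_emb:
  assumes p0: "p > 0"
  shows "chiG p d (emb p l t) = zz p (int t * dl p l d)"
proof -
  have "chiG p d (emb p l t) = zz p (int (t * fst d) + int p * int (((l * t) mod p) * snd d))"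
    unfolding chi_zz[OF p0] emb_def by simp
  also have "\<dots> = zz p (int (t * fst d) + int p * (int (l * t) * int (snd d)))"
  proof (rule zz_mod_eq2[OF p0])
    have "(int p * ((int (l*t) mod int p) * int (snd d))) mod int (p*p) = (int p * (int (l*t) * int (snd d))) mod int (p*p)"
      by (rule mod_pp_cong[OF p0])
    hence "(int p * int (((l * t) mod p) * snd d)) mod int (p*p) = (int p * (int (l*t) * int (snd d))) mod int (p*p)"
      by (simp add: of_nat_mod)
    thus "(int (t * fst d) + int p * int (((l * t) mod p) * snd d)) mod int (p*p) =
          (int (t * fst d) + int p * (int (l * t) * int (snd d))) mod int (p*p)"
      by (rule mod_add_cong[OF refl])
  qed
  also have "int (t * fst d) + int p * (int (l * t) * int (snd d)) = int t * dl p l d"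
    unfolding dl_def by (simp add: algebra_simps)
  finally show ?thesis .
qed

lemma hat_emb:
  assumes p0: "p > 0"
  shows "hat p (emb p l ` X) d = (\<Sum>t\<in>X. zz p (int t * dl p l d))"
  unfolding hat_def by (simp add: sum.reindex[OF inj_emb] chi_emb[OF p0])

definition Per :: "nat \<Rightarrow> nat set \<Rightarrow> bool" where
  "Per p X \<longleftrightarrow> (\<forall>t\<in>X. (t + p) mod (p*p) \<in> X)"

definition Eqc :: "nat \<Rightarrow> nat set \<Rightarrow> bool" where
  "Eqc p X \<longleftrightarrow> (\<forall>r<p. card {t\<in>X. t mod p = r} = card {t\<in>X. t mod p = 0})"

definition CycForm :: "nat \<Rightarrow> nat set \<Rightarrow> bool" where
  "CycForm p X \<longleftrightarrow> card X = 1 \<or> X = {..<p*p} \<or> (card X = p \<and> Per p X)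
      \<or> (card X = p \<and> inj_on (\<lambda>t. t mod p) X)"

lemma PerClass:
  assumes p0: "p > 0" and per: "Per p X" and t: "t \<in> X" and tlt: "t < p*p"
    and y: "y < p*p" and ym: "y mod p = t mod p"
  shows "y \<in> X"
proof -
  have kk: "(t + k*p) mod (p*p) \<in> X" for k
  proof (induction k)
    case 0 thus ?case using t tlt by simp
  next
    case (Suc k)
    have "((t + k*p) mod (p*p) + p) mod (p*p) \<in> X" using per Suc unfolding Per_def by blast
    moreover have "((t + k*p) mod (p*p) + p) mod (p*p) = (t + Suc k * p) mod (p*p)"
    proof -
      have "((t + k*p) mod (p*p) + p) mod (p*p) = (t + k*p + p) mod (p*p)" by (rule mod_add_left_eq)
      also have "t + k*p + p = t + Suc k * p" by simp
      finally show ?thesis .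
    qed
    ultimately show ?case by simp
  qed
  have e: "(y + p*p) mod p = t mod p" using ym by simp
  have le: "t \<le> y + p*p" using tlt by simp
  have "p dvd (y + p*p - t)" using mod_eq_dvd_iff_nat[OF le, of p] e by simp
  then obtain k where k: "y + p*p - t = p * k" by (auto elim!: dvdE)
  hence "t + k*p = y + p*p" using tlt by (simp add: algebra_simps)
  hence "(t + k*p) mod (p*p) = y" using y by simp
  thus ?thesis using kk by metis
qed

lemma PE:
  assumes p0: "p > 0" and X: "X \<subseteq> {..<p*p}" and ne: "X \<noteq> {}" and per: "Per p X" and eqc: "Eqc p X"
  shows "X = {..<p*p}"
proof
  show "X \<subseteq> {..<p*p}" by (rule X)
  show "{..<p*p} \<subseteq> X"
  proof
    fix y assume "y \<in> {..<p*p}"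
    hence y: "y < p*p" by simp
    obtain t0 where t0: "t0 \<in> X" using ne by auto
    have fin: "finite X" using X finite_subset by blast
    have "card {t\<in>X. t mod p = t0 mod p} > 0" using t0 fin by (auto simp: card_gt_0_iff)
    moreover have "card {t\<in>X. t mod p = y mod p} = card {t\<in>X. t mod p = t0 mod p}"
    proof -
      have a: "card {t\<in>X. t mod p = y mod p} = card {t\<in>X. t mod p = 0}"
        using eqc[unfolded Eqc_def, rule_format, of "y mod p"] mod_less_divisor[OF p0, of y] by blast
      have b: "card {t\<in>X. t mod p = t0 mod p} = card {t\<in>X. t mod p = 0}"
        using eqc[unfolded Eqc_def, rule_format, of "t0 mod p"] mod_less_divisor[OF p0, of t0] by blast
      show ?thesis using a b by linarith
    qed
    ultimately have "card {t\<in>X. t mod p = y mod p} > 0" by simp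
    hence "{t\<in>X. t mod p = y mod p} \<noteq> {}" by (metis card.empty less_irrefl)
    then obtain t where t: "t \<in> X" "t mod p = y mod p" by auto
    show "y \<in> X" using PerClass[OF p0 per t(1) _ y] t X by auto
  qed
qed

lemma PerForm:
  assumes p0: "p > 0" and X: "X \<subseteq> {..<p*p}" and c: "card X = p" and per: "Per p X"
  obtains r where "r < p" "X = (\<lambda>k. r + k*p) ` {..<p}"
proof -
  have fin: "finite X" using X finite_subset by blast
  have "X \<noteq> {}" using c p0 by auto
  then obtain t0 where t0: "t0 \<in> X" by auto
  define r where "r = t0 mod p"
  have r: "r < p" unfolding r_def using p0 by simp
  have lt: "r + k*p < p*p" if "k < p" for k
  proof -
    have "r + k*p < p + k*p" using r by simp
    also have "\<dots> = (k+1)*p" by simp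
    also have "\<dots> \<le> p*p" using that by (intro mult_right_mono) auto
    finally show ?thesis .
  qed
  have sub: "(\<lambda>k. r + k*p) ` {..<p} \<subseteq> X"
  proof
    fix y assume "y \<in> (\<lambda>k. r + k*p) ` {..<p}"
    then obtain k where k: "k < p" "y = r + k*p" by auto
    have "y mod p = t0 mod p" using k r unfolding r_def by simp
    thus "y \<in> X" using PerClass[OF p0 per t0 _ _] k lt t0 X by auto
  qed
  have "inj_on (\<lambda>k. r + k*p) {..<p}"
  proof (rule inj_onI)
    fix k k' assume "r + k*p = r + k'*p"
    hence "k*p = k'*p" by simp
    thus "k = k'" using p0 by simp
  qed
  hence "card ((\<lambda>k. r + k*p) ` {..<p}) = p" by (simp add: card_image)
  hence "card ((\<lambda>k. r + k*p) ` {..<p}) = card X" using c by simp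
  hence "(\<lambda>k. r + k*p) ` {..<p} = X" using card_subset_eq[OF fin sub] by blast
  thus ?thesis using that r by blast
qed


lemma dvd_le_eq: "p dvd n \<Longrightarrow> 0 < n \<Longrightarrow> n \<le> p \<Longrightarrow> n = (p::nat)"
  using dvd_imp_le by (metis le_antisym)

lemma CT1:
  assumes pr: "prime p" and X: "X \<subseteq> {..<p*p}" and ne: "X \<noteq> {}"
    and til: "tile p (emb p l ` X)"
  shows "CycForm p X"
proof -
  have p0: "p > 0" using pr prime_gt_0_nat by blast
  have p2: "p \<ge> 2" using pr prime_ge_2_nat by blast
  define A where "A = emb p l ` X"
  have fin: "finite X" using X finite_subset by blast
  have AG: "A \<subseteq> grpG p" unfolding A_def using X emb_in[OF p0] by auto
  have cA: "card A = card X" unfolding A_def by (rule card_image[OF inj_emb])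
  obtain T where T: "T \<subseteq> grpG p" and cAT: "card A * card T = p^3"
    and hz: "\<forall>d\<in>grpG p. d \<noteq> (0,0) \<longrightarrow> hat p A d * hat p T d = 0"
    using tile_facts[OF p0 til[folded A_def] AG] by blast
  have "card X dvd p^3" using cAT cA by (metis dvd_triv_left)
  then obtain i where i: "i \<le> 3" "card X = p^i" using divides_primepow_nat[OF pr] by blast
  have le: "card X \<le> p*p" using card_mono[OF _ X] by simp
  show ?thesis
  proof (cases "i = 0")
    case True thus ?thesis using i unfolding CycForm_def by simp
  next
    case i0: False
    show ?thesis
    proof (cases "i = 1")
      case i1: True
      hence cX: "card X = p" using i by simp
      have "\<exists>d\<in>grpG p. d \<noteq> (0,0) \<and> hat p A d = 0"
      proof (rule ccontr)
        assume "\<not> (\<exists>d\<in>grpG p. d \<noteq> (0,0) \<and> hat p A d = 0)"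
        hence "\<forall>d\<in>grpG p. d \<noteq> (0,0) \<longrightarrow> hat p T d = 0" using hz by auto
        moreover have "T \<noteq> {}" using cAT p0 by auto
        ultimately have "T = grpG p" using hat_all_zero[OF p0 T] by blast
        hence "card A * p^3 = 1 * p^3" using cAT card_G by simp
        hence "card A = 1" using p0 by (metis mult_right_cancel power_not_zero not_gr0)
        thus False using cA cX p2 by simp
      qed
      then obtain d where d: "d \<in> grpG p" "hat p A d = 0" by blast
      hence s: "(\<Sum>t\<in>X. zz p (int t * dl p l d)) = 0" unfolding A_def hat_emb[OF p0] by simp
      show ?thesis
      proof (cases "int p dvd dl p l d")
        case False
        hence "Per p X" using ZC(3)[OF pr X s] unfolding Per_def by blast
        thus ?thesis using cX unfolding CycForm_def by simp
      next
        case True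
        hence eq: "\<forall>r<p. card {t\<in>X. t mod p = r} = card {t\<in>X. t mod p = 0}" using ZC(4)[OF pr X s] by blast
        have "inj_on (\<lambda>t. t mod p) X"
          by (rule fiber_inj[OF fin cX _ eq p0]) (use p0 in simp)
        thus ?thesis using cX unfolding CycForm_def by simp
      qed
    next
      case i1: False
      show ?thesis
      proof (cases "i = 2")
        case True
        hence "card X = p*p" using i by (simp add: power2_eq_square)
        hence "X = {..<p*p}" using card_subset_eq[OF _ X] by simp
        thus ?thesis unfolding CycForm_def by simp
      next
        case False
        hence "i = 3" using i i0 i1 by simp
        hence "p*p*p \<le> p*p" using i le by (simp add: power3_eq_cube)
        moreover have "p*p*1 < p*p*p" using p2 by (intro mult_strict_left_mono) auto
        ultimately show ?thesis by simp
      qed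
    qed
  qed
qed

lemma inner_emb:
  assumes p0: "p > 0"
  shows "innerA (emb p l ` X) (chiG p b) (chiG p b') = (\<Sum>t\<in>X. zz p (int t * (dl p l b - dl p l b')))"
proof -
  have "innerA (emb p l ` X) (chiG p b) (chiG p b') = (\<Sum>t\<in>X. chiG p b (emb p l t) * cnj (chiG p b' (emb p l t)))"
    unfolding innerA_def by (simp add: sum.reindex[OF inj_emb])
  also have "\<dots> = (\<Sum>t\<in>X. zz p (int t * (dl p l b - dl p l b')))"
    unfolding chi_emb[OF p0] zz_diff[symmetric] by (simp add: algebra_simps)
  finally show ?thesis .
qed

lemma CS1:
  assumes pr: "prime p" and X: "X \<subseteq> {..<p*p}" and ne: "X \<noteq> {}"
    and sp: "spectral_set p (emb p l ` X)"
  shows "CycForm p X"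
proof -
  have p0: "p > 0" using pr prime_gt_0_nat by blast
  have p2: "p \<ge> 2" using pr prime_ge_2_nat by blast
  define A where "A = emb p l ` X"
  have fin: "finite X" using X finite_subset by blast
  have cA: "card A = card X" unfolding A_def by (rule card_image[OF inj_emb])
  obtain B where sB: "spectrum_of p A B" using sp unfolding spectral_set_def A_def by blast
  have BG: "B \<subseteq> grpG p" using sB unfolding spectrum_of_def by simp
  have fB: "finite B" using BG finite_G finite_subset by blast
  have cB: "card X \<le> card B" using spectral_card[OF sB _ p0] cA fin unfolding A_def by simp
  have orth: "(\<Sum>t\<in>X. zz p (int t * (dl p l b - dl p l b'))) = 0" if "b \<in> B" "b' \<in> B" "b \<noteq> b'" for b b'
    using sB that unfolding spectrum_of_def A_def inner_emb[OF p0] by blast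
  have cpos: "card X > 0" using fin ne by (simp add: card_gt_0_iff)
  show ?thesis
  proof (cases "card X = 1")
    case True thus ?thesis unfolding CycForm_def by simp
  next
    case False
    hence "card B \<ge> 2" using cB cpos by simp
    then obtain b0 b0' where b0: "b0 \<in> B" "b0' \<in> B" "b0 \<noteq> b0'" using two_elems[OF fB] by blast
    have pdv: "p dvd card X" using ZC(1)[OF pr X orth[OF b0]] .
    define P1 where "P1 = (\<exists>b\<in>B. \<exists>b'\<in>B. b \<noteq> b' \<and> \<not> int p dvd (dl p l b - dl p l b'))"
    define P2 where "P2 = (\<exists>b\<in>B. \<exists>b'\<in>B. b \<noteq> b' \<and> int p dvd (dl p l b - dl p l b'))"
    have perI: "Per p X" if P1
    proof -
      obtain b b' where bb: "b \<in> B" "b' \<in> B" "b \<noteq> b'" "\<not> int p dvd (dl p l b - dl p l b')"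
        using \<open>P1\<close> unfolding P1_def by blast
      show ?thesis using ZC(3)[OF pr X orth[OF bb(1-3)] bb(4)] unfolding Per_def by blast
    qed
    have eqI: "Eqc p X" if P2
    proof -
      obtain b b' where bb: "b \<in> B" "b' \<in> B" "b \<noteq> b'" "int p dvd (dl p l b - dl p l b')"
        using \<open>P2\<close> unfolding P2_def by blast
      show ?thesis using ZC(4)[OF pr X orth[OF bb(1-3)] bb(4)] unfolding Eqc_def by blast
    qed
    have P12: "P1 \<or> P2" using b0 unfolding P1_def P2_def by blast
    show ?thesis
    proof (cases "P1 \<and> P2")
      case True
      hence "X = {..<p*p}" using PE[OF p0 X ne perI eqI] by blast
      thus ?thesis unfolding CycForm_def by simp
    next
      case nb: False
      show ?thesis
      proof (cases P1)
        case True
        hence nP2: "\<not> P2" using nb by simp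
        define phi where "phi b = nat (dl p l b mod int p)" for b
        have "inj_on phi B"
        proof (rule inj_onI)
          fix b b' assume bb: "b \<in> B" "b' \<in> B" "phi b = phi b'"
          hence "dl p l b mod int p = dl p l b' mod int p" unfolding phi_def using p0
            by (metis eq_nat_nat_iff pos_mod_sign of_nat_0_less_iff)
          hence "int p dvd (dl p l b - dl p l b')" by (simp add: mod_eq_dvd_iff)
          thus "b = b'" using nP2 bb unfolding P2_def by blast
        qed
        moreover have "phi ` B \<subseteq> {..<p}" unfolding phi_def using p0 by (auto simp: nat_less_iff)
        ultimately have "card B \<le> p"
        proof -
          assume inj: "inj_on phi B" and sub: "phi ` B \<subseteq> {..<p}"
          have "card B = card (phi ` B)" using card_image[OF inj] by simp
          also have "\<dots> \<le> card {..<p}" by (rule card_mono[OF _ sub]) simp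
          finally show ?thesis by simp
        qed
        hence "card X = p" using cB pdv cpos dvd_le_eq by auto
        thus ?thesis using perI[OF True] unfolding CycForm_def by simp
      next
        case False
        hence P2 and nP1: "\<not> P1" using P12 by auto
        define psi where "psi b = nat (dl p l b mod int (p*p))" for b
        have "inj_on psi B"
        proof (rule inj_onI)
          fix b b' assume bb: "b \<in> B" "b' \<in> B" "psi b = psi b'"
          hence "dl p l b mod int (p*p) = dl p l b' mod int (p*p)" unfolding psi_def using p0
            by (metis eq_nat_nat_iff pos_mod_sign of_nat_0_less_iff mult_pos_pos)
          hence "int (p*p) dvd (dl p l b - dl p l b')" by (simp add: mod_eq_dvd_iff)
          show "b = b'"
          proof (rule ccontr)
            assume "b \<noteq> b'"
            hence "\<not> int (p*p) dvd (dl p l b - dl p l b')" using ZC(2)[OF pr X orth[OF bb(1,2)] ne] by blast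
            thus False using \<open>int (p*p) dvd (dl p l b - dl p l b')\<close> by simp
          qed
        qed
        moreover have "psi ` B \<subseteq> (\<lambda>k. nat (dl p l b0 mod int p) + k*p) ` {..<p}"
        proof
          fix v assume "v \<in> psi ` B"
          then obtain b where b: "b \<in> B" "v = psi b" by auto
          have vlt: "v < p*p" unfolding b psi_def using p0 by (simp add: nat_less_iff)
          have "int (v mod p) = dl p l b mod int p" unfolding b psi_def by (rule nat_mod_aux[OF p0])
          also have "\<dots> = dl p l b0 mod int p"
          proof (cases "b = b0")
            case False
            hence "int p dvd (dl p l b - dl p l b0)" using nP1 b b0 unfolding P1_def by blast
            thus ?thesis by (simp add: mod_eq_dvd_iff)
          qed simp
          finally have vm: "v mod p = nat (dl p l b0 mod int p)" by simp
          have "v div p < p" using vlt p0 by (simp add: div_less_iff_less_mult)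
          moreover have "v = nat (dl p l b0 mod int p) + (v div p) * p" using vm by (metis mod_div_mult_eq add.commute)
          ultimately show "v \<in> (\<lambda>k. nat (dl p l b0 mod int p) + k*p) ` {..<p}" by auto
        qed
        ultimately have "card B \<le> p"
        proof -
          assume inj: "inj_on psi B" and sub: "psi ` B \<subseteq> (\<lambda>k. nat (dl p l b0 mod int p) + k*p) ` {..<p}"
          have "card B = card (psi ` B)" using card_image[OF inj] by simp
          also have "\<dots> \<le> card ((\<lambda>k. nat (dl p l b0 mod int p) + k*p) ` {..<p})" by (rule card_mono[OF _ sub]) simp
          also have "\<dots> \<le> card {..<p}" by (rule card_image_le) simp
          finally show ?thesis by simp
        qed
        hence cX: "card X = p" using cB pdv cpos dvd_le_eq by auto
        have "inj_on (\<lambda>t. t mod p) X"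
          by (rule fiber_inj[OF fin cX _ eqI[OF \<open>P2\<close>, unfolded Eqc_def] p0]) (use p0 in simp)
        thus ?thesis using cX unfolding CycForm_def by simp
      qed
    qed
  qed
qed


lemma GENTILE_emb:
  assumes p0: "p > 0" and X: "X \<subseteq> {..<p*p}" and T: "T \<subseteq> grpG p"
    and c: "card X * card T = p^3"
    and inj: "\<And>t t' \<tau> \<tau>'. t \<in> X \<Longrightarrow> t' \<in> X \<Longrightarrow> \<tau> \<in> T \<Longrightarrow> \<tau>' \<in> T \<Longrightarrow>
                 gadd p (emb p l t) \<tau> = gadd p (emb p l t') \<tau>' \<Longrightarrow> t = t'"
  shows "tile p (emb p l ` X)"
proof (rule GENTILE[OF p0 _ T])
  show "emb p l ` X \<subseteq> grpG p" using X emb_in[OF p0] by auto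
  show "card (emb p l ` X) * card T = p^3" using c by (simp add: card_image[OF inj_emb])
  show "\<forall>a\<in>emb p l ` X. \<forall>a'\<in>emb p l ` X. \<forall>t\<in>T. \<forall>t'\<in>T. gadd p a t = gadd p a' t' \<longrightarrow> a = a' \<and> t = t'"
  proof (intro ballI impI)
    fix a a' \<tau> \<tau>' assume a: "a \<in> emb p l ` X" and a': "a' \<in> emb p l ` X" and \<tau>: "\<tau> \<in> T" "\<tau>' \<in> T"
      and e: "gadd p a \<tau> = gadd p a' \<tau>'"
    obtain t t' where tt: "t \<in> X" "t' \<in> X" "a = emb p l t" "a' = emb p l t'" using a a' by auto
    have "t = t'" using inj[OF tt(1,2) \<tau>] e tt by simp
    hence "a = a'" using tt by simp
    moreover have "\<tau> = \<tau>'" using gadd_cancel[OF p0, of \<tau> \<tau>' a] \<tau> T e \<open>a = a'\<close> by auto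
    ultimately show "a = a' \<and> \<tau> = \<tau>'" by simp
  qed
qed

lemma GENSPEC_emb:
  assumes p0: "p > 0" and X: "X \<subseteq> {..<p*p}" and ne: "X \<noteq> {}"
    and fI: "finite I" and I: "I \<noteq> {}" and b: "\<forall>i\<in>I. b i \<in> grpG p"
    and orth: "\<And>i j. i \<in> I \<Longrightarrow> j \<in> I \<Longrightarrow> i \<noteq> j \<Longrightarrow> (\<Sum>t\<in>X. zz p (int t * (dl p l (b i) - dl p l (b j)))) = 0"
    and dual: "\<And>t t'. t \<in> X \<Longrightarrow> t' \<in> X \<Longrightarrow> t \<noteq> t' \<Longrightarrow> (\<Sum>i\<in>I. zz p ((int t - int t') * dl p l (b i))) = 0"
  shows "spectral_set p (emb p l ` X)"
proof (rule GENSPEC[OF p0 fI I b])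
  show "finite (emb p l ` X)" using X finite_subset by blast
  show "emb p l ` X \<noteq> {}" using ne by simp
  show "\<forall>i\<in>I. \<forall>j\<in>I. i \<noteq> j \<longrightarrow> (\<Sum>a\<in>emb p l ` X. chiG p (b i) a * cnj (chiG p (b j) a)) = 0"
  proof (intro ballI impI)
    fix i j assume ij: "i \<in> I" "j \<in> I" "i \<noteq> j"
    have "(\<Sum>a\<in>emb p l ` X. chiG p (b i) a * cnj (chiG p (b j) a)) = innerA (emb p l ` X) (chiG p (b i)) (chiG p (b j))"
      unfolding innerA_def ..
    also have "\<dots> = 0" unfolding inner_emb[OF p0] by (rule orth[OF ij])
    finally show "(\<Sum>a\<in>emb p l ` X. chiG p (b i) a * cnj (chiG p (b j) a)) = 0" .
  qed
  show "\<forall>a\<in>emb p l ` X. \<forall>a'\<in>emb p l ` X. a \<noteq> a' \<longrightarrow> (\<Sum>i\<in>I. chiG p (b i) a * cnj (chiG p (b i) a')) = 0"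
  proof (intro ballI impI)
    fix a a' assume a: "a \<in> emb p l ` X" and a': "a' \<in> emb p l ` X" and ne': "a \<noteq> a'"
    obtain t t' where tt: "t \<in> X" "t' \<in> X" "a = emb p l t" "a' = emb p l t'" using a a' by auto
    have "t \<noteq> t'" using ne' tt by auto
    have "(\<Sum>i\<in>I. chiG p (b i) a * cnj (chiG p (b i) a')) = (\<Sum>i\<in>I. zz p ((int t - int t') * dl p l (b i)))"
      unfolding tt chi_emb[OF p0] zz_diff[symmetric] by (simp add: algebra_simps)
    also have "\<dots> = 0" by (rule dual[OF tt(1,2) \<open>t \<noteq> t'\<close>])
    finally show "(\<Sum>i\<in>I. chiG p (b i) a * cnj (chiG p (b i) a')) = 0" .
  qed
qed

lemma int_dvd_small_eq:
  fixes a b :: nat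
  assumes "int m dvd int a - int b" "a < m" "b < m"
  shows "a = b"
  using small_eq_nat assms by blast

lemma mod_pp_diff:
  assumes "(x::nat) mod (p*p) = y mod (p*p)"
  shows "int (p*p) dvd int x - int y"
proof -
  have "int x mod int (p*p) = int y mod int (p*p)" using assms by (metis of_nat_mod)
  thus ?thesis by (simp add: mod_eq_dvd_iff)
qed

lemma Cyc_back:
  assumes pr: "prime p" and X: "X \<subseteq> {..<p*p}" and ne: "X \<noteq> {}" and F: "CycForm p X"
  shows "tile p (emb p l ` X) \<and> spectral_set p (emb p l ` X)"
proof -
  have p0: "p > 0" using pr prime_gt_0_nat by blast
  have p2: "p \<ge> 2" using pr prime_ge_2_nat by blast
  have fin: "finite X" using X finite_subset by blast
  have AG: "emb p l ` X \<subseteq> grpG p" using X emb_in[OF p0] by auto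
  have lt_pp: "r + k*p < p*p" if "r < p" "k < p" for r k
  proof -
    have "r + k*p < p + k*p" using that by simp
    also have "\<dots> = (k+1)*p" by simp
    also have "\<dots> \<le> p*p" using that by (intro mult_right_mono) auto
    finally show ?thesis .
  qed
  have p_lt_pp: "j < p \<Longrightarrow> j < p*p" for j using p2 by (metis less_le_trans mult_le_mono1 mult_1 one_le_numeral order.trans)
  have ndv_small: "\<not> int p dvd (int j - int j')" if "j < p" "j' < p" "j \<noteq> j'" for j j'
    using small_eq_nat[of p j j'] that by auto
  consider (one) "card X = 1" | (all) "X = {..<p*p}" | (per) "card X = p" "Per p X"
    | (tr) "card X = p" "inj_on (\<lambda>t. t mod p) X"
    using F unfolding CycForm_def by blast
  thus ?thesis
  proof cases
    case one
    have "card (emb p l ` X) = 1" using one by (simp add: card_image[OF inj_emb])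
    thus ?thesis using singleton_tile_spec[OF p0 AG] by simp
  next
    case all
    show ?thesis
    proof
      show "tile p (emb p l ` X)"
      proof (rule GENTILE_emb[OF p0 X, of "(\<lambda>j. (0,j)) ` {..<p}"])
        show "(\<lambda>j. (0::nat, j)) ` {..<p} \<subseteq> grpG p" using p0 by (auto simp: grpG_def)
        have "card ((\<lambda>j. (0::nat, j)) ` {..<p}) = p" by (simp add: card_image inj_on_def)
        thus "card X * card ((\<lambda>j. (0::nat, j)) ` {..<p}) = p^3" using all by (simp add: power3_eq_cube)
        fix t t' \<tau> \<tau>' assume t: "t \<in> X" "t' \<in> X" and \<tau>: "\<tau> \<in> (\<lambda>j. (0::nat, j)) ` {..<p}" "\<tau>' \<in> (\<lambda>j. (0::nat, j)) ` {..<p}"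
          and e: "gadd p (emb p l t) \<tau> = gadd p (emb p l t') \<tau>'"
        have "t mod p^2 = t' mod p^2" using e \<tau> unfolding gadd_def emb_def by auto
        thus "t = t'" using t X by (simp add: power2_eq_square subset_iff)
      qed
      show "spectral_set p (emb p l ` X)"
      proof (rule GENSPEC_emb[OF p0 X ne, of "{..<p*p}" "\<lambda>j. (j, 0)"])
        show "\<forall>i\<in>{..<p*p}. (i, 0::nat) \<in> grpG p" using p0 by (auto simp: grpG_def power2_eq_square)
        fix i j assume ij: "i \<in> {..<p*p}" "j \<in> {..<p*p}" "i \<noteq> j"
        have "(\<Sum>t\<in>X. zz p (int t * (dl p l (i, 0) - dl p l (j, 0)))) = (\<Sum>t<p*p. zz p (int t * (int i - int j)))"
          unfolding all dl_def by simp
        also have "\<dots> = 0"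
        proof (rule geo_pp[OF p0])
          show "int i - int j \<noteq> 0" using ij by simp
          have "int i < int (p*p)" "int j < int (p*p)" using ij by (metis lessThan_iff of_nat_less_iff)+
          thus "\<bar>int i - int j\<bar> < int (p*p)" by linarith
        qed
        finally show "(\<Sum>t\<in>X. zz p (int t * (dl p l (i, 0) - dl p l (j, 0)))) = 0" .
      next
        fix t t' assume tt: "t \<in> X" "t' \<in> X" "t \<noteq> t'"
        have "(\<Sum>i\<in>{..<p*p}. zz p ((int t - int t') * dl p l (i, 0))) = (\<Sum>i<p*p. zz p (int i * (int t - int t')))"
          unfolding dl_def by (simp add: mult.commute)
        also have "\<dots> = 0"
        proof (rule geo_pp[OF p0])
          show "int t - int t' \<noteq> 0" using tt by simp
          have "int t < int (p*p)" "int t' < int (p*p)" using tt all by (metis lessThan_iff of_nat_less_iff)+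
          thus "\<bar>int t - int t'\<bar> < int (p*p)" by linarith
        qed
        finally show "(\<Sum>i\<in>{..<p*p}. zz p ((int t - int t') * dl p l (i, 0))) = 0" .
      qed (use p0 in \<open>auto simp: lessThan_empty_iff\<close>)
    qed
  next
    case per
    obtain r where r: "r < p" "X = (\<lambda>k. r + k*p) ` {..<p}" using PerForm[OF p0 X per(1) per(2)] by blast
    have injr: "inj_on (\<lambda>k. r + k*p) {..<p}"
    proof (rule inj_onI)
      fix k k' assume "r + k*p = r + k'*p"
      thus "k = k'" using p0 by simp
    qed
    show ?thesis
    proof
      show "tile p (emb p l ` X)"
      proof (rule GENTILE_emb[OF p0 X, of "{..<p} \<times> {..<p}"])
        show "{..<p} \<times> {..<p} \<subseteq> grpG p" using p_lt_pp by (auto simp: grpG_def power2_eq_square)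
        show "card X * card ({..<p} \<times> {..<p}) = p^3" using per by (simp add: card_cartesian_product power3_eq_cube)
        fix t t' \<tau> \<tau>' assume t: "t \<in> X" "t' \<in> X" and \<tau>: "\<tau> \<in> {..<p} \<times> {..<p}" "\<tau>' \<in> {..<p} \<times> {..<p}"
          and e: "gadd p (emb p l t) \<tau> = gadd p (emb p l t') \<tau>'"
        obtain k k' where kk: "k < p" "k' < p" "t = r + k*p" "t' = r + k'*p" using t r by auto
        have "(t + fst \<tau>) mod (p*p) = (t' + fst \<tau>') mod (p*p)" using e unfolding gadd_def emb_def by (simp add: power2_eq_square)
        hence d: "int (p*p) dvd int (t + fst \<tau>) - int (t' + fst \<tau>')" by (rule mod_pp_diff)
        have eqd: "int (t + fst \<tau>) - int (t' + fst \<tau>') = int p * (int k - int k') + (int (fst \<tau>) - int (fst \<tau>'))"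
          unfolding kk by (simp add: algebra_simps)
        have d2: "int p dvd int p * (int k - int k') + (int (fst \<tau>) - int (fst \<tau>'))"
          using d unfolding eqd by (metis dvd_mult_left of_nat_mult)
        hence "int p dvd int (fst \<tau>) - int (fst \<tau>')" by (simp add: dvd_add_right_iff)
        hence f: "fst \<tau> = fst \<tau>'" using \<tau> by (intro small_eq_nat[of p]) auto
        have "int (t + fst \<tau>) - int (t' + fst \<tau>') = int p * (int k - int k')" using eqd f by simp
        hence "int p * int p dvd int p * (int k - int k')" using d by simp
        hence "int p dvd int k - int k'" using p0 by (subst (asm) dvd_times_left_cancel_iff) auto
        hence "k = k'" using kk by (intro small_eq_nat[of p]) auto
        thus "t = t'" using kk by simp
      qed
      show "spectral_set p (emb p l ` X)"
      proof (rule GENSPEC_emb[OF p0 X ne, of "{..<p}" "\<lambda>j. (j, 0)"])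
        show "\<forall>i\<in>{..<p}. (i, 0::nat) \<in> grpG p" using p_lt_pp p0 by (auto simp: grpG_def power2_eq_square)
        fix i j assume ij: "i \<in> {..<p}" "j \<in> {..<p}" "i \<noteq> j"
        define m where "m = int i - int j"
        have nm: "\<not> int p dvd m" unfolding m_def using ij ndv_small by auto
        have "(\<Sum>t\<in>X. zz p (int t * (dl p l (i, 0) - dl p l (j, 0)))) = (\<Sum>k<p. zz p (int (r + k*p) * m))"
          unfolding r(2) m_def dl_def by (simp add: sum.reindex[OF injr])
        also have "\<dots> = (\<Sum>k<p. zz p (int r * m) * zz p (int k * (int p * m)))"
          by (intro sum.cong refl) (simp add: zz_add[symmetric] algebra_simps)
        also have "\<dots> = zz p (int r * m) * (\<Sum>k<p. zz p (int k * (int p * m)))" by (simp add: sum_distrib_left)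
        also have "(\<Sum>k<p. zz p (int k * (int p * m))) = 0" by (rule geo_p[OF p0 nm])
        finally show "(\<Sum>t\<in>X. zz p (int t * (dl p l (i, 0) - dl p l (j, 0)))) = 0" by simp
      next
        fix t t' assume tt: "t \<in> X" "t' \<in> X" "t \<noteq> t'"
        obtain k k' where kk: "k < p" "k' < p" "t = r + k*p" "t' = r + k'*p" using tt r by auto
        have "k \<noteq> k'" using tt kk by auto
        hence nm: "\<not> int p dvd (int k - int k')" using ndv_small kk by auto
        have "(\<Sum>i\<in>{..<p}. zz p ((int t - int t') * dl p l (i, 0))) = (\<Sum>i<p. zz p (int i * (int p * (int k - int k'))))"
          unfolding dl_def kk by (intro sum.cong refl) (simp add: algebra_simps)
        also have "\<dots> = 0" by (rule geo_p[OF p0 nm])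
        finally show "(\<Sum>i\<in>{..<p}. zz p ((int t - int t') * dl p l (i, 0))) = 0" .
      qed (use p0 in \<open>auto simp: lessThan_empty_iff\<close>)
    qed
  next
    case tr
    show ?thesis
    proof
      define T where "T = (\<lambda>x. (p * fst x, snd x)) ` ({..<p} \<times> {..<p})"
      show "tile p (emb p l ` X)"
      proof (rule GENTILE_emb[OF p0 X, of T])
        show "T \<subseteq> grpG p" unfolding T_def grpG_def using p0 by (auto simp: power2_eq_square)
        have "inj_on (\<lambda>x. (p * fst x, snd x)) ({..<p} \<times> {..<p})" using p0 by (auto simp: inj_on_def prod_eq_iff)
        hence "card T = p*p" unfolding T_def by (simp add: card_image card_cartesian_product)
        thus "card X * card T = p^3" using tr by (simp add: power3_eq_cube)
        fix t t' \<tau> \<tau>' assume t: "t \<in> X" "t' \<in> X" and \<tau>: "\<tau> \<in> T" "\<tau>' \<in> T"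
          and e: "gadd p (emb p l t) \<tau> = gadd p (emb p l t') \<tau>'"
        obtain s s' where ss: "fst \<tau> = p * s" "fst \<tau>' = p * s'" using \<tau> unfolding T_def by auto
        have "(t + fst \<tau>) mod (p*p) = (t' + fst \<tau>') mod (p*p)" using e unfolding gadd_def emb_def by (simp add: power2_eq_square)
        hence d: "int (p*p) dvd int (t + fst \<tau>) - int (t' + fst \<tau>')" by (rule mod_pp_diff)
        have "int (t + fst \<tau>) - int (t' + fst \<tau>') = (int t - int t') + int p * (int s - int s')"
          unfolding ss by (simp add: algebra_simps)
        hence "int p dvd (int t - int t') + int p * (int s - int s')"
          using d by (metis dvd_mult_left of_nat_mult)
        hence "int p dvd int t - int t'" by (simp add: dvd_add_left_iff)
        hence "int t mod int p = int t' mod int p" by (simp add: mod_eq_dvd_iff)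
        hence "t mod p = t' mod p" by (metis of_nat_eq_iff of_nat_mod)
        thus "t = t'" using inj_onD[OF tr(2) _ t] by simp
      qed
      show "spectral_set p (emb p l ` X)"
      proof (rule GENSPEC_emb[OF p0 X ne, of "{..<p}" "\<lambda>j. (p*j, 0)"])
        show "\<forall>i\<in>{..<p}. (p*i, 0::nat) \<in> grpG p" using p0 by (auto simp: grpG_def power2_eq_square)
        have bij: "(\<lambda>t. t mod p) ` X = {..<p}" using bij_to_range[OF fin tr(1) _ tr(2)] p0 by simp
        fix i j assume ij: "i \<in> {..<p}" "j \<in> {..<p}" "i \<noteq> j"
        define m where "m = int i - int j"
        have nm: "\<not> int p dvd m" unfolding m_def using ij ndv_small by auto
        have "(\<Sum>t\<in>X. zz p (int t * (dl p l (p*i, 0) - dl p l (p*j, 0)))) = (\<Sum>t\<in>X. zz p (int (t mod p) * (int p * m)))"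
        proof (intro sum.cong refl)
          fix t assume "t \<in> X"
          have "int t * (int p * m) - int (t mod p) * (int p * m) = int (p*p) * (int (t div p) * m)"
          proof -
            have "int t = int (t mod p) + int p * int (t div p)" by (metis of_nat_add of_nat_mult mod_mult_div_eq)
            thus ?thesis by (simp add: algebra_simps)
          qed
          hence "int (p*p) dvd int t * (int p * m) - int (t mod p) * (int p * m)"
            by (metis dvd_triv_left)
          hence "(int t * (int p * m)) mod int (p*p) = (int (t mod p) * (int p * m)) mod int (p*p)"
            by (simp only: mod_eq_dvd_iff)
          moreover have "dl p l (p*i, 0) - dl p l (p*j, 0) = int p * m" unfolding dl_def m_def by (simp add: algebra_simps)
          ultimately show "zz p (int t * (dl p l (p*i, 0) - dl p l (p*j, 0))) = zz p (int (t mod p) * (int p * m))"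
            using zz_mod_eq2[OF p0] by simp
        qed
        also have "\<dots> = (\<Sum>k\<in>(\<lambda>t. t mod p) ` X. zz p (int k * (int p * m)))"
          by (simp add: sum.reindex[OF tr(2)])
        also have "\<dots> = 0" unfolding bij by (rule geo_p[OF p0 nm])
        finally show "(\<Sum>t\<in>X. zz p (int t * (dl p l (p*i, 0) - dl p l (p*j, 0)))) = 0" .
      next
        fix t t' assume tt: "t \<in> X" "t' \<in> X" "t \<noteq> t'"
        have "t mod p \<noteq> t' mod p" using tt tr(2) by (metis inj_on_eq_iff)
        hence nm: "\<not> int p dvd (int t - int t')"
          by (metis mod_eq_dvd_iff of_nat_eq_iff of_nat_mod)
        have "(\<Sum>i\<in>{..<p}. zz p ((int t - int t') * dl p l (p*i, 0))) = (\<Sum>i<p. zz p (int i * (int p * (int t - int t'))))"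
          unfolding dl_def by (intro sum.cong refl) (simp add: algebra_simps)
        also have "\<dots> = 0" by (rule geo_p[OF p0 nm])
        finally show "(\<Sum>i\<in>{..<p}. zz p ((int t - int t') * dl p l (p*i, 0))) = 0" .
      qed (use p0 in \<open>auto simp: lessThan_empty_iff\<close>)
    qed
  qed
qed


definition embN :: "nat \<Rightarrow> nat \<times> nat \<Rightarrow> nat \<times> nat" where
  "embN p x = (p * fst x, snd x)"

definition ph :: "int \<Rightarrow> int \<Rightarrow> nat \<times> nat \<Rightarrow> int" where
  "ph D1 D2 x = int (fst x) * D1 + int (snd x) * D2"

definition NCForm :: "nat \<Rightarrow> (nat \<times> nat) set \<Rightarrow> bool" where
  "NCForm p Y \<longleftrightarrow> card Y = 1 \<or> Y = {..<p} \<times> {..<p} \<or>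
     (card Y = p \<and> (\<exists>D1 D2. \<not> (int p dvd D1 \<and> int p dvd D2) \<and> inj_on (\<lambda>x. nat (ph D1 D2 x mod int p)) Y))"

lemma inj_embN: "p > 0 \<Longrightarrow> inj_on (embN p) Y"
  unfolding embN_def inj_on_def by (simp add: prod_eq_iff)

lemma embN_in:
  assumes "p > 0" "x \<in> {..<p} \<times> {..<p}"
  shows "embN p x \<in> grpG p"
proof -
  have "p * fst x < p * p" using assms by auto
  thus ?thesis using assms unfolding embN_def grpG_def by (auto simp: power2_eq_square)
qed

lemma chi_embN:
  assumes p0: "p > 0"
  shows "chiG p d (embN p x) = zz p (int p * ph (int (fst d)) (int (snd d)) x)"
  unfolding chi_zz[OF p0] embN_def ph_def by (simp add: algebra_simps)

lemma hat_embN: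
  assumes p0: "p > 0"
  shows "hat p (embN p ` Y) d = (\<Sum>x\<in>Y. zz p (int p * ph (int (fst d)) (int (snd d)) x))"
  unfolding hat_def by (simp add: sum.reindex[OF inj_embN[OF p0]] chi_embN[OF p0])

lemma zz_p_cong:
  assumes p0: "p > 0" and d: "int p dvd X - Y"
  shows "zz p (int p * X) = zz p (int p * Y)"
proof (rule zz_mod_eq2[OF p0])
  obtain k where k: "X - Y = int p * k" using d by (auto elim!: dvdE)
  have "int p * X - int p * Y = int (p*p) * k" using k by (simp add: algebra_simps)
  hence "int (p*p) dvd int p * X - int p * Y" by (metis dvd_triv_left)
  thus "int p * X mod int (p * p) = int p * Y mod int (p * p)" by (simp only: mod_eq_dvd_iff)
qed

lemma ph_fibers:
  assumes pr: "prime p" and Y: "Y \<subseteq> {..<p} \<times> {..<p}"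
    and s: "(\<Sum>x\<in>Y. zz p (int p * ph D1 D2 x)) = 0"
  shows "\<forall>k<p. card {x\<in>Y. nat (ph D1 D2 x mod int p) = k} = card {x\<in>Y. nat (ph D1 D2 x mod int p) = 0}"
proof (intro allI impI)
  fix k assume k: "k < p"
  have p0: "p > 0" using pr prime_gt_0_nat by blast
  have s': "(\<Sum>x\<in>Y. zz p (int p * (int (fst x) * D1 + int (snd x) * D2))) = 0" using s unfolding ph_def .
  have e: "nat (ph D1 D2 x mod int p) = j \<longleftrightarrow> (int (fst x) * D1 + int (snd x) * D2) mod int p = int j" for x j
    unfolding ph_def using p0 by auto
  show "card {x\<in>Y. nat (ph D1 D2 x mod int p) = k} = card {x\<in>Y. nat (ph D1 D2 x mod int p) = 0}"
    unfolding e using ZN(3)[OF pr Y s'] k by simp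
qed

lemma NT1:
  assumes pr: "prime p" and Y: "Y \<subseteq> {..<p} \<times> {..<p}" and ne: "Y \<noteq> {}"
    and til: "tile p (embN p ` Y)"
  shows "NCForm p Y"
proof -
  have p0: "p > 0" using pr prime_gt_0_nat by blast
  have p2: "p \<ge> 2" using pr prime_ge_2_nat by blast
  define A where "A = embN p ` Y"
  have fin: "finite Y" using Y by (rule finite_subset) simp
  have AG: "A \<subseteq> grpG p" unfolding A_def using Y embN_in[OF p0] by auto
  have cA: "card A = card Y" unfolding A_def by (rule card_image[OF inj_embN[OF p0]])
  obtain T where T: "T \<subseteq> grpG p" and cAT: "card A * card T = p^3"
    and hz: "\<forall>d\<in>grpG p. d \<noteq> (0,0) \<longrightarrow> hat p A d * hat p T d = 0"
    using tile_facts[OF p0 til[folded A_def] AG] by blast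
  have "card Y dvd p^3" using cAT cA by (metis dvd_triv_left)
  then obtain i where i: "i \<le> 3" "card Y = p^i" using divides_primepow_nat[OF pr] by blast
  have le: "card Y \<le> p*p" using card_mono[OF _ Y] by (simp add: card_cartesian_product)
  show ?thesis
  proof (cases "i = 0")
    case True thus ?thesis using i unfolding NCForm_def by simp
  next
    case i0: False
    show ?thesis
    proof (cases "i = 1")
      case i1: True
      hence cY: "card Y = p" using i by simp
      have "\<exists>d\<in>grpG p. d \<noteq> (0,0) \<and> hat p A d = 0"
      proof (rule ccontr)
        assume "\<not> (\<exists>d\<in>grpG p. d \<noteq> (0,0) \<and> hat p A d = 0)"
        hence "\<forall>d\<in>grpG p. d \<noteq> (0,0) \<longrightarrow> hat p T d = 0" using hz by auto
        moreover have "T \<noteq> {}" using cAT p0 by auto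
        ultimately have "T = grpG p" using hat_all_zero[OF p0 T] by blast
        hence "card A * p^3 = 1 * p^3" using cAT card_G by simp
        hence "card A = 1" using p0 by (metis mult_right_cancel power_not_zero not_gr0)
        thus False using cA cY p2 by simp
      qed
      then obtain d where d: "d \<in> grpG p" "hat p A d = 0" by blast
      hence s: "(\<Sum>x\<in>Y. zz p (int p * ph (int (fst d)) (int (snd d)) x)) = 0"
        unfolding A_def hat_embN[OF p0] by simp
      have nd: "\<not> (int p dvd int (fst d) \<and> int p dvd int (snd d))"
        using ZN(2)[OF pr Y s[unfolded ph_def] ne] .
      have "inj_on (\<lambda>x. nat (ph (int (fst d)) (int (snd d)) x mod int p)) Y"
        by (rule fiber_inj[OF fin cY _ ph_fibers[OF pr Y s] p0]) (use p0 in \<open>simp add: nat_less_iff\<close>)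
      thus ?thesis using cY nd unfolding NCForm_def by blast
    next
      case i1: False
      show ?thesis
      proof (cases "i = 2")
        case True
        hence "card Y = card ({..<p} \<times> {..<p})" using i by (simp add: power2_eq_square card_cartesian_product)
        hence "Y = {..<p} \<times> {..<p}" using card_subset_eq[OF _ Y] by simp
        thus ?thesis unfolding NCForm_def by simp
      next
        case False
        hence "i = 3" using i i0 i1 by simp
        hence "p*p*p \<le> p*p" using i le by (simp add: power3_eq_cube)
        moreover have "p*p*1 < p*p*p" using p2 by (intro mult_strict_left_mono) auto
        ultimately show ?thesis by simp
      qed
    qed
  qed
qed

lemma inner_embN:
  assumes p0: "p > 0"
  shows "innerA (embN p ` Y) (chiG p b) (chiG p b') =
     (\<Sum>x\<in>Y. zz p (int p * ph (int (fst b) - int (fst b')) (int (snd b) - int (snd b')) x))"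
proof -
  have "innerA (embN p ` Y) (chiG p b) (chiG p b') = (\<Sum>x\<in>Y. chiG p b (embN p x) * cnj (chiG p b' (embN p x)))"
    unfolding innerA_def by (simp add: sum.reindex[OF inj_embN[OF p0]])
  also have "\<dots> = (\<Sum>x\<in>Y. zz p (int p * ph (int (fst b) - int (fst b')) (int (snd b) - int (snd b')) x))"
    unfolding chi_embN[OF p0] zz_diff[symmetric] ph_def by (simp add: algebra_simps)
  finally show ?thesis .
qed

lemma find_k:
  assumes pr: "prime p" and nd: "\<not> (int p dvd D1 \<and> int p dvd D2)"
    and c: "int p dvd D1 * v2 - D2 * v1"
  shows "\<exists>k. int p dvd k * D1 - v1 \<and> int p dvd k * D2 - v2"
proof -
  have pi: "prime (int p)" using pr by simp
  show ?thesis
  proof (cases "int p dvd D1")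
    case False
    have "coprime D1 (int p)" using False pi by (metis coprime_commute prime_imp_coprime)
    then obtain i where "[D1 * i = 1] (mod int p)" using cong_solve_coprime_int by blast
    hence i: "int p dvd D1 * i - 1" by (simp add: cong_iff_dvd_diff)
    define k where "k = v1 * i"
    have a: "k * D1 - v1 = v1 * (D1 * i - 1)" unfolding k_def by (simp add: algebra_simps)
    have b: "D1 * (k * D2 - v2) = (D1 * i - 1) * (v1 * D2) + (-1) * (D1 * v2 - D2 * v1)"
      unfolding k_def by (simp add: algebra_simps)
    have "int p dvd D1 * (k * D2 - v2)" unfolding b using i c by (intro dvd_add dvd_mult2 dvd_mult)
    hence "int p dvd k * D2 - v2" using False pi by (simp add: prime_dvd_mult_iff)
    moreover have "int p dvd k * D1 - v1" unfolding a using i by (rule dvd_mult)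
    ultimately show ?thesis by blast
  next
    case True
    hence False2: "\<not> int p dvd D2" using nd by blast
    have "coprime D2 (int p)" using False2 pi by (metis coprime_commute prime_imp_coprime)
    then obtain i where "[D2 * i = 1] (mod int p)" using cong_solve_coprime_int by blast
    hence i: "int p dvd D2 * i - 1" by (simp add: cong_iff_dvd_diff)
    define k where "k = v2 * i"
    have a: "k * D2 - v2 = v2 * (D2 * i - 1)" unfolding k_def by (simp add: algebra_simps)
    have b: "D2 * (k * D1 - v1) = (D2 * i - 1) * (v2 * D1) + 1 * (D1 * v2 - D2 * v1)"
      unfolding k_def by (simp add: algebra_simps)
    have "int p dvd D2 * (k * D1 - v1)" unfolding b using i c by (intro dvd_add dvd_mult2 dvd_mult)
    hence "int p dvd k * D1 - v1" using False2 pi by (simp add: prime_dvd_mult_iff)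
    moreover have "int p dvd k * D2 - v2" unfolding a using i by (rule dvd_mult)
    ultimately show ?thesis by blast
  qed
qed


lemma zz_p_dvd_1:
  assumes p0: "p > 0" and "int p dvd X"
  shows "zz p (int p * X) = 1"
  using zz_p_cong[OF p0, of X 0] assms by simp

lemma NS1:
  assumes pr: "prime p" and Y: "Y \<subseteq> {..<p} \<times> {..<p}" and ne: "Y \<noteq> {}"
    and sp: "spectral_set p (embN p ` Y)"
  shows "NCForm p Y"
proof -
  have p0: "p > 0" using pr prime_gt_0_nat by blast
  have p2: "p \<ge> 2" using pr prime_ge_2_nat by blast
  define A where "A = embN p ` Y"
  have fin: "finite Y" using Y by (rule finite_subset) simp
  have AG: "A \<subseteq> grpG p" unfolding A_def using Y embN_in[OF p0] by auto
  have cA: "card A = card Y" unfolding A_def by (rule card_image[OF inj_embN[OF p0]])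
  obtain B where sB: "spectrum_of p A B" using sp unfolding spectral_set_def A_def by blast
  have BG: "B \<subseteq> grpG p" using sB unfolding spectrum_of_def by simp
  have fB: "finite B" using BG finite_G finite_subset by blast
  have cB: "card Y \<le> card B" using spectral_card[OF sB _ p0] cA fin unfolding A_def by simp
  have orth: "(\<Sum>x\<in>Y. zz p (int p * ph (int (fst b) - int (fst b')) (int (snd b) - int (snd b')) x)) = 0"
    if "b \<in> B" "b' \<in> B" "b \<noteq> b'" for b b'
    using sB that unfolding spectrum_of_def A_def inner_embN[OF p0] by blast
  have cpos: "card Y > 0" using fin ne by (simp add: card_gt_0_iff)
  show ?thesis
  proof (cases "card Y = 1")
    case True thus ?thesis unfolding NCForm_def by simp
  next
    case False
    hence "card B \<ge> 2" using cB cpos by simp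
    then obtain b0 b0' where b0: "b0 \<in> B" "b0' \<in> B" "b0 \<noteq> b0'" using two_elems[OF fB] by blast
    note s0 = orth[OF b0]
    have pdv: "p dvd card Y" using ZN(1)[OF pr Y s0[unfolded ph_def]] .
    show ?thesis
    proof (cases "card B \<le> p")
      case True
      hence cY: "card Y = p" using cB pdv cpos dvd_le_eq by auto
      have nd: "\<not> (int p dvd (int (fst b0) - int (fst b0')) \<and> int p dvd (int (snd b0) - int (snd b0')))"
        using ZN(2)[OF pr Y s0[unfolded ph_def] ne] .
      have "inj_on (\<lambda>x. nat (ph (int (fst b0) - int (fst b0')) (int (snd b0) - int (snd b0')) x mod int p)) Y"
        by (rule fiber_inj[OF fin cY _ ph_fibers[OF pr Y s0] p0]) (use p0 in \<open>simp add: nat_less_iff\<close>)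
      thus ?thesis using cY nd unfolding NCForm_def by blast
    next
      case False
      hence Bbig: "card B > p" by simp
      have VZ: "hat p A v = 0" if v: "v \<in> grpG p" "\<not> (int p dvd int (fst v) \<and> int p dvd int (snd v))" for v
      proof -
        define psi where "psi b = nat ((int (fst b) * int (snd v) - int (snd b) * int (fst v)) mod int p)" for b :: "nat \<times> nat"
        have "\<not> inj_on psi B"
        proof
          assume inj: "inj_on psi B"
          have "psi ` B \<subseteq> {..<p}" unfolding psi_def using p0 by (auto simp: nat_less_iff)
          hence "card (psi ` B) \<le> p" by (metis card_lessThan card_mono finite_lessThan)
          thus False using card_image[OF inj] Bbig by simp
        qed
        then obtain b b' where bb: "b \<in> B" "b' \<in> B" "b \<noteq> b'" "psi b = psi b'"
          unfolding inj_on_def by blast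
        define D1 where "D1 = int (fst b) - int (fst b')"
        define D2 where "D2 = int (snd b) - int (snd b')"
        have s: "(\<Sum>x\<in>Y. zz p (int p * ph D1 D2 x)) = 0" unfolding D1_def D2_def by (rule orth[OF bb(1-3)])
        have nd: "\<not> (int p dvd D1 \<and> int p dvd D2)" using ZN(2)[OF pr Y s[unfolded ph_def] ne] .
        have "(int (fst b) * int (snd v) - int (snd b) * int (fst v)) mod int p =
              (int (fst b') * int (snd v) - int (snd b') * int (fst v)) mod int p"
          using bb(4) unfolding psi_def using p0 by (metis eq_nat_nat_iff pos_mod_sign of_nat_0_less_iff)
        hence "int p dvd (int (fst b) * int (snd v) - int (snd b) * int (fst v)) - (int (fst b') * int (snd v) - int (snd b') * int (fst v))"
          by (simp only: mod_eq_dvd_iff)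
        moreover have "(int (fst b) * int (snd v) - int (snd b) * int (fst v)) - (int (fst b') * int (snd v) - int (snd b') * int (fst v))
                       = D1 * int (snd v) - D2 * int (fst v)" unfolding D1_def D2_def by (simp add: algebra_simps)
        ultimately have c: "int p dvd D1 * int (snd v) - D2 * int (fst v)" by simp
        obtain k where k: "int p dvd k * D1 - int (fst v)" "int p dvd k * D2 - int (snd v)"
          using find_k[OF pr nd c] by blast
        have nk: "\<not> int p dvd k"
        proof
          assume "int p dvd k"
          hence "int p dvd k * D1" "int p dvd k * D2" by simp_all
          hence "int p dvd int (fst v)" "int p dvd int (snd v)" using k by (metis dvd_diff_right_iff)+
          thus False using v(2) by simp
        qed
        define f where "f x = nat (ph D1 D2 x mod int p)" for x
        have "hat p A v = (\<Sum>x\<in>Y. zz p (int p * ph (int (fst v)) (int (snd v)) x))"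
          unfolding A_def hat_embN[OF p0] ..
        also have "\<dots> = (\<Sum>x\<in>Y. (\<lambda>j. zz p (int j * (int p * k))) (f x))"
        proof (intro sum.cong refl)
          fix x assume "x \<in> Y"
          have "int (f x) = ph D1 D2 x mod int p" unfolding f_def using p0 by simp
          have e1: "int p dvd ph (int (fst v)) (int (snd v)) x - k * ph D1 D2 x"
          proof -
            have "ph (int (fst v)) (int (snd v)) x - k * ph D1 D2 x =
                  (- int (fst x)) * (k * D1 - int (fst v)) + (- int (snd x)) * (k * D2 - int (snd v))"
              unfolding ph_def by (simp add: algebra_simps)
            thus ?thesis using k by (simp add: dvd_add dvd_mult)
          qed
          have e2: "int p dvd k * ph D1 D2 x - k * int (f x)"
          proof -
            have "k * ph D1 D2 x - k * int (f x) = k * (ph D1 D2 x - ph D1 D2 x mod int p)"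
              using \<open>int (f x) = ph D1 D2 x mod int p\<close> by (simp add: algebra_simps)
            thus ?thesis by (simp add: minus_mod_eq_mult_div)
          qed
          have "int p dvd ph (int (fst v)) (int (snd v)) x - int (f x) * k"
            using dvd_add[OF e1 e2] by (simp add: algebra_simps)
          hence "zz p (int p * ph (int (fst v)) (int (snd v)) x) = zz p (int p * (int (f x) * k))"
            by (rule zz_p_cong[OF p0])
          thus "zz p (int p * ph (int (fst v)) (int (snd v)) x) = zz p (int (f x) * (int p * k))"
            by (simp add: algebra_simps)
        qed
        also have "\<dots> = (\<Sum>j<p. of_nat (card {x\<in>Y. f x = j}) * zz p (int j * (int p * k)))"
          by (rule sum_by_fiber[OF fin]) (use p0 in \<open>simp add: f_def nat_less_iff\<close>)
        also have "\<dots> = (\<Sum>j<p. of_nat (card {x\<in>Y. f x = 0}) * zz p (int j * (int p * k)))"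
          using ph_fibers[OF pr Y s] unfolding f_def by (intro sum.cong refl) auto
        also have "\<dots> = of_nat (card {x\<in>Y. f x = 0}) * (\<Sum>j<p. zz p (int j * (int p * k)))"
          by (simp add: sum_distrib_left)
        also have "(\<Sum>j<p. zz p (int j * (int p * k))) = 0" by (rule geo_p[OF p0 nk])
        finally show ?thesis by simp
      qed
      have "{..<p} \<times> {..<p} \<subseteq> Y"
      proof
        fix y assume y: "y \<in> {..<p} \<times> {..<p}"
        define x where "x = embN p y"
        have xG: "x \<in> grpG p" unfolding x_def by (rule embN_in[OF p0 y])
        define Z0 where "Z0 = {d\<in>grpG p. int p dvd int (fst d) \<and> int p dvd int (snd d)}"
        have Z0G: "Z0 \<subseteq> grpG p" unfolding Z0_def by auto
        have z: "\<forall>d\<in>grpG p - Z0. hat p A d * cnj (chiG p d x) = 0"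
        proof
          fix d assume "d \<in> grpG p - Z0"
          hence "d \<in> grpG p" "\<not> (int p dvd int (fst d) \<and> int p dvd int (snd d))" unfolding Z0_def by auto
          thus "hat p A d * cnj (chiG p d x) = 0" using VZ by simp
        qed
        have "(\<Sum>d\<in>grpG p. hat p A d * cnj (chiG p d x)) = (\<Sum>d\<in>Z0. hat p A d * cnj (chiG p d x))"
          using sum.mono_neutral_right[of "grpG p" Z0 "\<lambda>d. hat p A d * cnj (chiG p d x)"] finite_G Z0G z by blast
        also have "\<dots> = (\<Sum>d\<in>Z0. of_nat (card A))"
        proof (intro sum.cong refl)
          fix d assume d: "d \<in> Z0"
          have dv: "int p dvd ph (int (fst d)) (int (snd d)) z" for z unfolding ph_def using d Z0_def by auto
          have "hat p A d = (\<Sum>z\<in>Y. 1)" unfolding A_def hat_embN[OF p0] using zz_p_dvd_1[OF p0 dv] by simp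
          moreover have "chiG p d x = 1" unfolding x_def chi_embN[OF p0] using zz_p_dvd_1[OF p0 dv] by simp
          ultimately show "hat p A d * cnj (chiG p d x) = of_nat (card A)" using cA by simp
        qed
        also have "\<dots> = of_nat (card Z0 * card A)" by simp
        finally have e: "(\<Sum>d\<in>grpG p. hat p A d * cnj (chiG p d x)) = of_nat (card Z0 * card A)" .
        have "(0,0) \<in> Z0" unfolding Z0_def using p0 by (simp add: grpG_def)
        hence "card Z0 > 0" using finite_subset[OF Z0G finite_G] by (auto simp: card_gt_0_iff)
        hence "card Z0 * card A \<noteq> 0" using cA cpos by simp
        hence "x \<in> A" using e INV[OF p0 AG xG] by (auto split: if_splits)
        then obtain y' where y': "y' \<in> Y" "embN p y = embN p y'" unfolding x_def A_def by auto
        have "y = y'" using inj_embN[OF p0, of UNIV] y'(2) by (simp add: inj_on_eq_iff)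
        thus "y \<in> Y" using y' by simp
      qed
      hence "Y = {..<p} \<times> {..<p}" using Y by auto
      thus ?thesis unfolding NCForm_def by simp
    qed
  qed
qed


lemma GENTILE_embN:
  assumes p0: "p > 0" and Y: "Y \<subseteq> {..<p} \<times> {..<p}" and T: "T \<subseteq> grpG p"
    and c: "card Y * card T = p^3"
    and inj: "\<And>x x' \<tau> \<tau>'. x \<in> Y \<Longrightarrow> x' \<in> Y \<Longrightarrow> \<tau> \<in> T \<Longrightarrow> \<tau>' \<in> T \<Longrightarrow>
                 gadd p (embN p x) \<tau> = gadd p (embN p x') \<tau>' \<Longrightarrow> x = x'"
  shows "tile p (embN p ` Y)"
proof (rule GENTILE[OF p0 _ T])
  show "embN p ` Y \<subseteq> grpG p" using Y embN_in[OF p0] by auto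
  show "card (embN p ` Y) * card T = p^3" using c by (simp add: card_image[OF inj_embN[OF p0]])
  show "\<forall>a\<in>embN p ` Y. \<forall>a'\<in>embN p ` Y. \<forall>t\<in>T. \<forall>t'\<in>T. gadd p a t = gadd p a' t' \<longrightarrow> a = a' \<and> t = t'"
  proof (intro ballI impI)
    fix a a' \<tau> \<tau>' assume a: "a \<in> embN p ` Y" and a': "a' \<in> embN p ` Y" and \<tau>: "\<tau> \<in> T" "\<tau>' \<in> T"
      and e: "gadd p a \<tau> = gadd p a' \<tau>'"
    obtain x x' where xx: "x \<in> Y" "x' \<in> Y" "a = embN p x" "a' = embN p x'" using a a' by auto
    have "x = x'" using inj[OF xx(1,2) \<tau>] e xx by simp
    hence "a = a'" using xx by simp
    moreover have "\<tau> = \<tau>'" using gadd_cancel[OF p0, of \<tau> \<tau>' a] \<tau> T e \<open>a = a'\<close> by auto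
    ultimately show "a = a' \<and> \<tau> = \<tau>'" by simp
  qed
qed

lemma GENSPEC_embN:
  assumes p0: "p > 0" and Y: "Y \<subseteq> {..<p} \<times> {..<p}" and ne: "Y \<noteq> {}"
    and fI: "finite I" and I: "I \<noteq> {}" and b: "\<forall>i\<in>I. b i \<in> grpG p"
    and orth: "\<And>i j. i \<in> I \<Longrightarrow> j \<in> I \<Longrightarrow> i \<noteq> j \<Longrightarrow>
       (\<Sum>x\<in>Y. zz p (int p * ph (int (fst (b i)) - int (fst (b j))) (int (snd (b i)) - int (snd (b j))) x)) = 0"
    and dual: "\<And>x x'. x \<in> Y \<Longrightarrow> x' \<in> Y \<Longrightarrow> x \<noteq> x' \<Longrightarrow>
       (\<Sum>i\<in>I. zz p (int p * ph (int (fst x) - int (fst x')) (int (snd x) - int (snd x')) (b i))) = 0"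
  shows "spectral_set p (embN p ` Y)"
proof (rule GENSPEC[OF p0 fI I b])
  show "finite (embN p ` Y)" using Y by (intro finite_imageI, rule finite_subset) simp_all
  show "embN p ` Y \<noteq> {}" using ne by simp
  show "\<forall>i\<in>I. \<forall>j\<in>I. i \<noteq> j \<longrightarrow> (\<Sum>a\<in>embN p ` Y. chiG p (b i) a * cnj (chiG p (b j) a)) = 0"
  proof (intro ballI impI)
    fix i j assume ij: "i \<in> I" "j \<in> I" "i \<noteq> j"
    have "(\<Sum>a\<in>embN p ` Y. chiG p (b i) a * cnj (chiG p (b j) a)) = innerA (embN p ` Y) (chiG p (b i)) (chiG p (b j))"
      unfolding innerA_def ..
    also have "\<dots> = 0" unfolding inner_embN[OF p0] by (rule orth[OF ij])
    finally show "(\<Sum>a\<in>embN p ` Y. chiG p (b i) a * cnj (chiG p (b j) a)) = 0" .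
  qed
  show "\<forall>a\<in>embN p ` Y. \<forall>a'\<in>embN p ` Y. a \<noteq> a' \<longrightarrow> (\<Sum>i\<in>I. chiG p (b i) a * cnj (chiG p (b i) a')) = 0"
  proof (intro ballI impI)
    fix a a' assume a: "a \<in> embN p ` Y" and a': "a' \<in> embN p ` Y" and ne': "a \<noteq> a'"
    obtain x x' where xx: "x \<in> Y" "x' \<in> Y" "a = embN p x" "a' = embN p x'" using a a' by auto
    have "x \<noteq> x'" using ne' xx by auto
    have "(\<Sum>i\<in>I. chiG p (b i) a * cnj (chiG p (b i) a')) =
          (\<Sum>i\<in>I. zz p (int p * ph (int (fst x) - int (fst x')) (int (snd x) - int (snd x')) (b i)))"
      unfolding xx chi_embN[OF p0] zz_diff[symmetric] ph_def by (simp add: algebra_simps)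
    also have "\<dots> = 0" by (rule dual[OF xx(1,2) \<open>x \<noteq> x'\<close>])
    finally show "(\<Sum>i\<in>I. chiG p (b i) a * cnj (chiG p (b i) a')) = 0" .
  qed
qed

lemma sq_sum:
  "(\<Sum>x\<in>{..<p} \<times> {..<p}. zz p (int p * ph m1 m2 x)) =
   (\<Sum>s<p. zz p (int s * (int p * m1))) * (\<Sum>u<p. zz p (int u * (int p * m2)))"
  unfolding ph_def sum_product sum.cartesian_product
  by (intro sum.cong refl) (auto simp: zz_add[symmetric] algebra_simps)

lemma sq_zero:
  assumes p0: "p > 0" and "\<not> (int p dvd m1 \<and> int p dvd m2)"
  shows "(\<Sum>x\<in>{..<p} \<times> {..<p}. zz p (int p * ph m1 m2 x)) = 0"
  unfolding sq_sum using geo_p[OF p0, of m1] geo_p[OF p0, of m2] assms(2) by auto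

lemma nat_mod_dvd: "p > 0 \<Longrightarrow> int p dvd int (nat (z mod int p)) - z"
  using mod_nat_dvd by blast

lemma NC_back:
  assumes pr: "prime p" and Y: "Y \<subseteq> {..<p} \<times> {..<p}" and ne: "Y \<noteq> {}" and F: "NCForm p Y"
  shows "tile p (embN p ` Y) \<and> spectral_set p (embN p ` Y)"
proof -
  have p0: "p > 0" using pr prime_gt_0_nat by blast
  have p2: "p \<ge> 2" using pr prime_ge_2_nat by blast
  have pi: "prime (int p)" using pr by simp
  have fin: "finite Y" using Y by (rule finite_subset) simp
  have AG: "embN p ` Y \<subseteq> grpG p" using Y embN_in[OF p0] by auto
  have lt_pp: "r + k*p < p*p" if "r < p" "k < p" for r k
  proof -
    have "r + k*p < p + k*p" using that by simp
    also have "\<dots> = (k+1)*p" by simp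
    also have "\<dots> \<le> p*p" using that by (intro mult_right_mono) auto
    finally show ?thesis .
  qed
  have ndv_small: "\<not> int p dvd (int j - int j')" if "j < p" "j' < p" "j \<noteq> j'" for j j'
    using small_eq_nat[of p j j'] that by auto
  consider (one) "card Y = 1" | (all) "Y = {..<p} \<times> {..<p}"
    | (tr) D1 D2 where "card Y = p" "\<not> (int p dvd D1 \<and> int p dvd D2)" "inj_on (\<lambda>x. nat (ph D1 D2 x mod int p)) Y"
    using F unfolding NCForm_def by blast
  thus ?thesis
  proof cases
    case one
    have "card (embN p ` Y) = 1" using one by (simp add: card_image[OF inj_embN[OF p0]])
    thus ?thesis using singleton_tile_spec[OF p0 AG] by simp
  next
    case all
    show ?thesis
    proof
      show "tile p (embN p ` Y)"
      proof (rule GENTILE_embN[OF p0 Y, of "(\<lambda>i. (i,0)) ` {..<p}"])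
        show "(\<lambda>i. (i, 0::nat)) ` {..<p} \<subseteq> grpG p" using p0 lt_pp[of _ 0] by (auto simp: grpG_def power2_eq_square)
        have "card ((\<lambda>i. (i, 0::nat)) ` {..<p}) = p" by (simp add: card_image inj_on_def)
        thus "card Y * card ((\<lambda>i. (i, 0::nat)) ` {..<p}) = p^3" using all by (simp add: card_cartesian_product power3_eq_cube)
        fix x x' \<tau> \<tau>' assume x: "x \<in> Y" "x' \<in> Y" and \<tau>: "\<tau> \<in> (\<lambda>i. (i, 0::nat)) ` {..<p}" "\<tau>' \<in> (\<lambda>i. (i, 0::nat)) ` {..<p}"
          and e: "gadd p (embN p x) \<tau> = gadd p (embN p x') \<tau>'"
        obtain i i' where ii: "i < p" "i' < p" "\<tau> = (i,0)" "\<tau>' = (i',0)" using \<tau> by auto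
        have xs: "fst x < p" "snd x < p" "fst x' < p" "snd x' < p" using x Y by auto
        have "(p * fst x + i) mod (p*p) = (p * fst x' + i') mod (p*p)" "snd x mod p = snd x' mod p"
          using e unfolding gadd_def embN_def ii by (simp_all add: power2_eq_square)
        moreover have "i + fst x * p < p*p" "i' + fst x' * p < p*p" using lt_pp ii xs by auto
        hence "p * fst x + i < p*p" "p * fst x' + i' < p*p" by (simp_all add: mult.commute add.commute)
        ultimately have e1: "p * fst x + i = p * fst x' + i'" and e2: "snd x = snd x'" using xs by simp_all
        have "i = i'" using e1 ii by (metis mod_mult_self3 mod_less mult.commute)
        hence "fst x = fst x'" using e1 p0 by simp
        thus "x = x'" using e2 by (simp add: prod_eq_iff)
      qed
      show "spectral_set p (embN p ` Y)"
      proof (rule GENSPEC_embN[OF p0 Y ne, of "{..<p} \<times> {..<p}" "\<lambda>x. x"])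
        show "\<forall>i\<in>{..<p} \<times> {..<p}. i \<in> grpG p" using lt_pp[of _ 0] p0 by (auto simp: grpG_def power2_eq_square)
        fix i j assume ij: "i \<in> {..<p} \<times> {..<p}" "j \<in> {..<p} \<times> {..<p}" "i \<noteq> j"
        have "\<not> (int p dvd (int (fst i) - int (fst j)) \<and> int p dvd (int (snd i) - int (snd j)))"
          using ij ndv_small by (auto simp: prod_eq_iff)
        thus "(\<Sum>x\<in>Y. zz p (int p * ph (int (fst i) - int (fst j)) (int (snd i) - int (snd j)) x)) = 0"
          unfolding all by (rule sq_zero[OF p0])
      next
        fix x x' assume xx: "x \<in> Y" "x' \<in> Y" "x \<noteq> x'"
        have "\<not> (int p dvd (int (fst x) - int (fst x')) \<and> int p dvd (int (snd x) - int (snd x')))"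
          using xx all ndv_small by (auto simp: prod_eq_iff)
        thus "(\<Sum>i\<in>{..<p} \<times> {..<p}. zz p (int p * ph (int (fst x) - int (fst x')) (int (snd x) - int (snd x')) i)) = 0"
          by (rule sq_zero[OF p0])
      qed (use p0 in auto)
    qed
  next
    case tr
    define phi where "phi x = nat (ph D1 D2 x mod int p)" for x
    have phi_lt: "phi x < p" for x unfolding phi_def using p0 by (simp add: nat_less_iff)
    have phi_dv: "int p dvd int (phi x) - ph D1 D2 x" for x unfolding phi_def by (rule nat_mod_dvd[OF p0])
    have injphi: "inj_on phi Y" using tr(3) unfolding phi_def .
    define xk where "xk k = nat ((int k * D2) mod int p)" for k :: nat
    define yk where "yk k = nat ((int k * (- D1)) mod int p)" for k :: nat
    have xk_lt: "xk k < p" for k unfolding xk_def using p0 by (simp add: nat_less_iff)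
    have yk_lt: "yk k < p" for k unfolding yk_def using p0 by (simp add: nat_less_iff)
    have xk_dv: "int p dvd int (xk k) - int k * D2" for k unfolding xk_def by (rule nat_mod_dvd[OF p0])
    have yk_dv: "int p dvd int (yk k) + int k * D1" for k
      using nat_mod_dvd[OF p0, of "int k * - D1"] unfolding yk_def by simp
    have kk_eq: "k = k'" if "k < p" "k' < p" "xk k = xk k'" "yk k = yk k'" for k k'
    proof (rule ccontr)
      assume "k \<noteq> k'"
      hence nk: "\<not> int p dvd (int k - int k')" using ndv_small that by auto
      have a: "int p dvd (int k - int k') * D2"
      proof -
        have "(int k - int k') * D2 = (int (xk k') - int k' * D2) - (int (xk k) - int k * D2)"
          using that(3) by (simp add: algebra_simps)
        thus ?thesis using xk_dv by (metis dvd_diff)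
      qed
      have b: "int p dvd (int k - int k') * D1"
      proof -
        have "(int k - int k') * D1 = (int (yk k) + int k * D1) - (int (yk k') + int k' * D1)"
          using that(4) by (simp add: algebra_simps)
        thus ?thesis using yk_dv by (metis dvd_diff)
      qed
      have "int p dvd D2" using a nk pi by (simp add: prime_dvd_mult_iff)
      moreover have "int p dvd D1" using b nk pi by (simp add: prime_dvd_mult_iff)
      ultimately show False using tr(2) by blast
    qed
    show ?thesis
    proof
      define tf where "tf ik = (fst ik + p * xk (snd ik), yk (snd ik))" for ik :: "nat \<times> nat"
      define T where "T = tf ` ({..<p} \<times> {..<p})"
      show "tile p (embN p ` Y)"
      proof (rule GENTILE_embN[OF p0 Y, of T])
        show "T \<subseteq> grpG p"
        proof
          fix \<tau> assume "\<tau> \<in> T"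
          then obtain i k where ik: "i < p" "k < p" "\<tau> = tf (i,k)" unfolding T_def by auto
          have "i + xk k * p < p*p" using lt_pp[OF ik(1) xk_lt] .
          thus "\<tau> \<in> grpG p" unfolding ik tf_def grpG_def using yk_lt by (simp add: power2_eq_square mult.commute)
        qed
        have "inj_on tf ({..<p} \<times> {..<p})"
        proof (rule inj_onI)
          fix a b assume a: "a \<in> {..<p} \<times> {..<p}" and b: "b \<in> {..<p} \<times> {..<p}" and e: "tf a = tf b"
          have e1: "fst a + p * xk (snd a) = fst b + p * xk (snd b)" and e2: "yk (snd a) = yk (snd b)"
            using e unfolding tf_def by simp_all
          have "fst a = fst b" using e1 a b by (metis mod_mult_self2 mod_less mem_Times_iff lessThan_iff)
          moreover have "xk (snd a) = xk (snd b)" using e1 calculation p0 by simp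
          ultimately show "a = b" using kk_eq[of "snd a" "snd b"] e2 a b by (auto simp: prod_eq_iff)
        qed
        hence "card T = p*p" unfolding T_def by (simp add: card_image card_cartesian_product)
        thus "card Y * card T = p^3" using tr(1) by (simp add: power3_eq_cube)
        fix x x' \<tau> \<tau>' assume x: "x \<in> Y" "x' \<in> Y" and \<tau>: "\<tau> \<in> T" "\<tau>' \<in> T"
          and e: "gadd p (embN p x) \<tau> = gadd p (embN p x') \<tau>'"
        obtain i k where ik: "i < p" "k < p" "\<tau> = tf (i,k)" using \<tau>(1) unfolding T_def by auto
        obtain i' k' where ik': "i' < p" "k' < p" "\<tau>' = tf (i',k')" using \<tau>(2) unfolding T_def by auto
        have c1: "(p * fst x + (i + p * xk k)) mod (p*p) = (p * fst x' + (i' + p * xk k')) mod (p*p)"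
          and c2: "(snd x + yk k) mod p = (snd x' + yk k') mod p"
          using e unfolding gadd_def embN_def ik(3) ik'(3) tf_def by (simp_all add: power2_eq_square)
        have d1: "int (p*p) dvd int (p * fst x + (i + p * xk k)) - int (p * fst x' + (i' + p * xk k'))"
          using c1 by (rule mod_pp_diff)
        have eqd1: "int (p * fst x + (i + p * xk k)) - int (p * fst x' + (i' + p * xk k')) =
                    int p * ((int (fst x) - int (fst x')) + (int (xk k) - int (xk k'))) + (int i - int i')"
          by (simp add: algebra_simps)
        have "int p dvd int p * ((int (fst x) - int (fst x')) + (int (xk k) - int (xk k'))) + (int i - int i')"
          using d1 unfolding eqd1 by (metis dvd_mult_left of_nat_mult)
        hence "int p dvd int i - int i'" by (simp add: dvd_add_right_iff)
        hence ii: "i = i'" using ik ik' by (intro small_eq_nat[of p]) auto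
        have eqd1': "int (p * fst x + (i + p * xk k)) - int (p * fst x' + (i' + p * xk k')) =
                    int p * ((int (fst x) - int (fst x')) + (int (xk k) - int (xk k')))"
          using eqd1 ii by simp
        have "int (p*p) dvd int p * ((int (fst x) - int (fst x')) + (int (xk k) - int (xk k')))"
          using d1 unfolding eqd1' .
        hence "int p * int p dvd int p * ((int (fst x) - int (fst x')) + (int (xk k) - int (xk k')))"
          by (simp only: of_nat_mult)
        hence E1: "int p dvd (int (fst x) - int (fst x')) + (int (xk k) - int (xk k'))"
          using p0 by (subst (asm) dvd_times_left_cancel_iff) auto
        have "int ((snd x + yk k) mod p) = int ((snd x' + yk k') mod p)" using c2 by simp
        hence "(int (snd x) + int (yk k)) mod int p = (int (snd x') + int (yk k')) mod int p"
          by (simp only: of_nat_mod of_nat_add)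
        hence "int p dvd (int (snd x) + int (yk k)) - (int (snd x') + int (yk k'))" by (simp only: mod_eq_dvd_iff)
        hence E2: "int p dvd (int (snd x) - int (snd x')) + (int (yk k) - int (yk k'))" by (simp add: algebra_simps)
        have id: "ph D1 D2 x - ph D1 D2 x' =
            D1 * ((int (fst x) - int (fst x')) + (int (xk k) - int (xk k')))
          + D2 * ((int (snd x) - int (snd x')) + (int (yk k) - int (yk k')))
          - D1 * ((int (xk k) - int k * D2) - (int (xk k') - int k' * D2))
          - D2 * ((int (yk k) + int k * D1) - (int (yk k') + int k' * D1))"
          unfolding ph_def by (simp add: algebra_simps)
        have "int p dvd ph D1 D2 x - ph D1 D2 x'"
          unfolding id
          by (rule dvd_diff[OF dvd_diff[OF dvd_add[OF dvd_mult[OF E1] dvd_mult[OF E2]]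
                 dvd_mult[OF dvd_diff[OF xk_dv xk_dv]]] dvd_mult[OF dvd_diff[OF yk_dv yk_dv]]])
        hence "ph D1 D2 x mod int p = ph D1 D2 x' mod int p" by (simp only: mod_eq_dvd_iff)
        hence "phi x = phi x'" unfolding phi_def by simp
        thus "x = x'" using inj_onD[OF injphi _ x] by simp
      qed
      define bc where "bc c = (nat ((int c * D1) mod int p), nat ((int c * D2) mod int p))" for c :: nat
      have bc1: "int p dvd int (fst (bc c)) - int c * D1" for c unfolding bc_def fst_conv by (rule nat_mod_dvd[OF p0])
      have bc2: "int p dvd int (snd (bc c)) - int c * D2" for c unfolding bc_def snd_conv by (rule nat_mod_dvd[OF p0])
      have bij: "phi ` Y = {..<p}" using bij_to_range[OF fin tr(1) _ injphi] phi_lt by simp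
      show "spectral_set p (embN p ` Y)"
      proof (rule GENSPEC_embN[OF p0 Y ne, of "{..<p}" bc])
        show "\<forall>i\<in>{..<p}. bc i \<in> grpG p"
        proof
          fix c assume "c \<in> {..<p}"
          have "nat ((int c * D1) mod int p) < p" "nat ((int c * D2) mod int p) < p" using p0 by (simp_all add: nat_less_iff)
          hence "nat ((int c * D1) mod int p) < p*p" using p2 by (metis less_le_trans mult_le_mono1 mult_1 one_le_numeral order.trans)
          thus "bc c \<in> grpG p" unfolding bc_def grpG_def using \<open>nat ((int c * D2) mod int p) < p\<close>
            by (simp add: power2_eq_square)
        qed
        fix c c' assume cc: "c \<in> {..<p}" "c' \<in> {..<p}" "c \<noteq> c'"
        define m where "m = int c - int c'"
        have nm: "\<not> int p dvd m" unfolding m_def using cc ndv_small by auto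
        have "(\<Sum>x\<in>Y. zz p (int p * ph (int (fst (bc c)) - int (fst (bc c'))) (int (snd (bc c)) - int (snd (bc c'))) x))
            = (\<Sum>x\<in>Y. zz p (int (phi x) * (int p * m)))"
        proof (intro sum.cong refl)
          fix x assume "x \<in> Y"
          have id: "ph (int (fst (bc c)) - int (fst (bc c'))) (int (snd (bc c)) - int (snd (bc c'))) x - int (phi x) * m =
              int (fst x) * ((int (fst (bc c)) - int c * D1) - (int (fst (bc c')) - int c' * D1))
            + int (snd x) * ((int (snd (bc c)) - int c * D2) - (int (snd (bc c')) - int c' * D2))
            - m * (int (phi x) - ph D1 D2 x)"
            unfolding ph_def m_def by (simp add: algebra_simps)
          have "int p dvd ph (int (fst (bc c)) - int (fst (bc c'))) (int (snd (bc c)) - int (snd (bc c'))) x - int (phi x) * m"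
            unfolding id
            by (rule dvd_diff[OF dvd_add[OF dvd_mult[OF dvd_diff[OF bc1 bc1]] dvd_mult[OF dvd_diff[OF bc2 bc2]]] dvd_mult[OF phi_dv]])
          from zz_p_cong[OF p0 this]
          show "zz p (int p * ph (int (fst (bc c)) - int (fst (bc c'))) (int (snd (bc c)) - int (snd (bc c'))) x)
                = zz p (int (phi x) * (int p * m))" by (simp add: algebra_simps)
        qed
        also have "\<dots> = (\<Sum>r\<in>phi ` Y. zz p (int r * (int p * m)))" by (simp add: sum.reindex[OF injphi])
        also have "\<dots> = 0" unfolding bij by (rule geo_p[OF p0 nm])
        finally show "(\<Sum>x\<in>Y. zz p (int p * ph (int (fst (bc c)) - int (fst (bc c'))) (int (snd (bc c)) - int (snd (bc c'))) x)) = 0" .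
      next
        fix x x' assume xx: "x \<in> Y" "x' \<in> Y" "x \<noteq> x'"
        define m where "m = ph D1 D2 x - ph D1 D2 x'"
        have nm: "\<not> int p dvd m"
        proof
          assume "int p dvd m"
          hence "ph D1 D2 x mod int p = ph D1 D2 x' mod int p" unfolding m_def by (simp only: mod_eq_dvd_iff)
          hence "phi x = phi x'" unfolding phi_def by simp
          thus False using inj_onD[OF injphi _ xx(1,2)] xx(3) by simp
        qed
        have "(\<Sum>c\<in>{..<p}. zz p (int p * ph (int (fst x) - int (fst x')) (int (snd x) - int (snd x')) (bc c)))
            = (\<Sum>c<p. zz p (int c * (int p * m)))"
        proof (intro sum.cong refl)
          fix c assume "c \<in> {..<p}"
          have id: "ph (int (fst x) - int (fst x')) (int (snd x) - int (snd x')) (bc c) - int c * m =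
              (int (fst (bc c)) - int c * D1) * (int (fst x) - int (fst x'))
            + (int (snd (bc c)) - int c * D2) * (int (snd x) - int (snd x'))"
            unfolding ph_def m_def by (simp add: algebra_simps)
          have "int p dvd ph (int (fst x) - int (fst x')) (int (snd x) - int (snd x')) (bc c) - int c * m"
            unfolding id by (rule dvd_add[OF dvd_mult2[OF bc1] dvd_mult2[OF bc2]])
          from zz_p_cong[OF p0 this]
          show "zz p (int p * ph (int (fst x) - int (fst x')) (int (snd x) - int (snd x')) (bc c))
                = zz p (int c * (int p * m))" by (simp add: algebra_simps)
        qed
        also have "\<dots> = 0" by (rule geo_p[OF p0 nm])
        finally show "(\<Sum>c\<in>{..<p}. zz p (int p * ph (int (fst x) - int (fst x')) (int (snd x) - int (snd x')) (bc c))) = 0" .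
      qed (use p0 in auto)
    qed
  qed
qed


theorem lemma5p6:
  fixes p :: nat and H A :: "(nat \<times> nat) set"
  assumes "prime p"
    and "is_subgroupG p H" and "H \<noteq> grpG p"
    and "A \<subseteq> H" and "A \<noteq> {}"
  shows "tile p A \<longleftrightarrow> spectral_set p A"
proof -
  have pr: "prime p" by fact
  have p0: "p > 0" using pr prime_gt_0_nat by blast
  have AG: "A \<subseteq> grpG p" using assms(2,4) unfolding is_subgroupG_def by auto
  from SUB[OF pr assms(2,3)]
  show ?thesis
  proof
    assume "H \<subseteq> Kinf p"
    hence AK: "A \<subseteq> Kinf p" using assms(4) by auto
    define Y where "Y = (\<lambda>a. (fst a div p, snd a)) ` A"
    have AY: "A = embN p ` Y"
    proof -
      have "a = embN p (fst a div p, snd a)" if "a \<in> A" for a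
      proof -
        have "p dvd fst a" using that AK unfolding Kinf_def by auto
        thus ?thesis unfolding embN_def by (simp add: prod_eq_iff)
      qed
      thus ?thesis unfolding Y_def image_image by (auto simp: image_iff)
    qed
    have Y: "Y \<subseteq> {..<p} \<times> {..<p}"
    proof
      fix y assume "y \<in> Y"
      then obtain a where a: "a \<in> A" "y = (fst a div p, snd a)" unfolding Y_def by auto
      have "fst a < p * p" "snd a < p" using a AG by (auto simp: grpG_def power2_eq_square)
      thus "y \<in> {..<p} \<times> {..<p}" using a p0 by (simp add: div_less_iff_less_mult)
    qed
    have ne: "Y \<noteq> {}" using assms(5) unfolding Y_def by simp
    show ?thesis
    proof
      assume "tile p A"
      hence "NCForm p Y" using NT1[OF pr Y ne] AY by simp
      thus "spectral_set p A" using NC_back[OF pr Y ne] AY by simp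
    next
      assume "spectral_set p A"
      hence "NCForm p Y" using NS1[OF pr Y ne] AY by simp
      thus "tile p A" using NC_back[OF pr Y ne] AY by simp
    qed
  next
    assume "\<exists>l<p. H \<subseteq> Klam p l"
    then obtain l where l: "l < p" "H \<subseteq> Klam p l" by blast
    hence AK: "A \<subseteq> Klam p l" using assms(4) by auto
    define X where "X = fst ` A"
    have AX: "A = emb p l ` X"
    proof -
      have "a = emb p l (fst a)" if "a \<in> A" for a
      proof -
        have "snd a = (l * fst a) mod p" using that AK unfolding Klam_def by auto
        thus ?thesis unfolding emb_def by (simp add: prod_eq_iff)
      qed
      thus ?thesis unfolding X_def image_image by (auto simp: image_iff)
    qed
    have X: "X \<subseteq> {..<p*p}" unfolding X_def using AG by (auto simp: grpG_def power2_eq_square)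
    have ne: "X \<noteq> {}" using assms(5) unfolding X_def by simp
    show ?thesis
    proof
      assume "tile p A"
      hence "CycForm p X" using CT1[OF pr X ne] AX by simp
      thus "spectral_set p A" using Cyc_back[OF pr X ne] AX by simp
    next
      assume "spectral_set p A"
      hence "CycForm p X" using CS1[OF pr X ne] AX by simp
      thus "tile p A" using Cyc_back[OF pr X ne] AX by simp
    qed
  qed
qed


end
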